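(* Consider the E-FAS wiretap model described in the context, with a fixed power-splitting policy $P_s=(1-\theta_a)P$, $P_a=\theta_a P$, where $\theta_a\in[0,1)$ is fixed, and regard the ergodic secrecy rate $\bar R_s=\bar R_s(P)$ as a function of the total transmit power $P>0$. Then: (i) if $\theta_a=0$, then $\lim_{P\to\infty}\bar R_s(P)=0$; (ii) if $\theta_a\in(0,1)$, then $\lim_{P\to\infty}\bar R_s(P)$ exists, is finite, and equals $$\eta\,\mathbb{E}\Big[\big(\log_2(1+\gamma_b^\infty)-\log_2(1+\gamma_e^\infty)\big)^+\Big],$$ where $\gamma_b^\infty=\dfrac{(1-\theta_a)\|\hat{\mathbf h}_b\|^2}{(1-\theta_a)\mathbf w^H\tilde{\mathbf R}\mathbf w+\theta_a\operatorname{tr}(\mathbf V^H\tilde{\mathbf R}\mathbf V)}$ and $\gamma_e^\infty=\dfrac{(1-\theta_a)|X|^2}{\theta_a Y}$; moreover this limit is strictly positive. In particular, the high-power limit of the ergodic secrecy rate equals zero if and only if $\theta_a=0$.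
   Context: Let $M\ge 2$ be an integer. Fix constants $\sigma^2>0$, pilot length $\tau_p>0$, pilot power $\rho_p>0$, block length $T_c>\tau_p$, and set $\eta=1-\tau_p/T_c$. Let $\mathbf R_b,\mathbf R_e\in\mathbb C^{M\times M}$ be Hermitian positive definite matrices, let $\mathbf C\in\mathbb C^{M\times M}$ have spectral norm $\|\mathbf C\|\le 1$, let $\rho\in[0,1)$, and let $\beta_b>0$, $\beta_e>0$ be constants. Let $\mathbf g_b,\mathbf u\sim\mathcal{CN}(\mathbf 0,\mathbf I_M)$ and $\mathbf n_p\sim\mathcal{CN}(\mathbf 0,\sigma^2\mathbf I_M)$ be mutually independent. Define $\mathbf h_b=\sqrt{\beta_b}\,\mathbf R_b^{1/2}\mathbf g_b$, $\mathbf g_e=\rho\mathbf C\mathbf g_b+\sqrt{1-\rho^2}\,\mathbf u$, $\mathbf h_e=\sqrt{\beta_e}\,\mathbf R_e^{1/2}\mathbf g_e$, and the pilot observation $\mathbf y_p=\sqrt{\tau_p\rho_p}\,\mathbf h_b+\mathbf n_p$. With $\mathbf R_{h}=\beta_b\mathbf R_b$, the MMSE estimate is $\hat{\mathbf h}_b=\sqrt{\tau_p\rho_p}\,\mathbf R_h(\tau_p\rho_p\mathbf R_h+\sigma^2\mathbf I_M)^{-1}\mathbf y_p$ and the error covariance is $\tilde{\mathbf R}=\mathbf R_h-\tau_p\rho_p\mathbf R_h(\tau_p\rho_p\mathbf R_h+\sigma^2\mathbf I_M)^{-1}\mathbf R_h$. Let $\mathbf w=\hat{\mathbf h}_b/\|\hat{\mathbf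 h}_b\|$ (well defined a.s.) and let $\mathbf V\in\mathbb C^{M\times(M-1)}$ be a matrix (measurable function of $\hat{\mathbf h}_b$) with orthonormal columns spanning the orthogonal complement of $\hat{\mathbf h}_b$, i.e. $\mathbf V^H\mathbf V=\mathbf I_{M-1}$, $\mathbf V^H\hat{\mathbf h}_b=\mathbf 0$. For powers $P_s,P_a\ge0$ with $P_s+P_a=P$, define $\gamma_b=\dfrac{P_s\|\hat{\mathbf h}_b\|^2}{P_s\mathbf w^H\tilde{\mathbf R}\mathbf w+P_a\operatorname{tr}(\mathbf V^H\tilde{\mathbf R}\mathbf V)+\sigma^2}$ and $\gamma_e=\dfrac{P_s|X|^2}{P_aY+\sigma^2}$, where $X=\mathbf h_e^H\mathbf w$ and $Y=\|\mathbf V^H\mathbf h_e\|^2$. The ergodic secrecy rate is $\bar R_s=\eta\,\mathbb E\big[(\log_2(1+\gamma_b)-\log_2(1+\gamma_e))^+\big]$, where $(x)^+=\max\{0,x\}$ and the expectation is over all randomness. *)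

theory Defs
  imports "HOL-Analysis.Analysis"
begin

definition cinner :: "complex^'n \<Rightarrow> complex^'n \<Rightarrow> complex" where
  "cinner x y = (\<Sum>i\<in>UNIV. cnj (x $ i) * y $ i)"

definition ctrans :: "complex^'n^'m \<Rightarrow> complex^'m^'n" where
  "ctrans A = (\<chi> i j. cnj (A $ j $ i))"

definition cmat_scale :: "complex \<Rightarrow> complex^'n^'m \<Rightarrow> complex^'n^'m" where
  "cmat_scale c A = (\<chi> i j. c * A $ i $ j)"

definition hermitian :: "complex^'n^'n \<Rightarrow> bool" where
  "hermitian A \<longleftrightarrow> ctrans A = A"

definition pos_def :: "complex^'n^'n \<Rightarrow> bool" where
  "pos_def A \<longleftrightarrow> hermitian A \<and> (\<forall>x. x \<noteq> 0 \<longrightarrow> Re (cinner x (A *v x)) > 0)"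

definition pos_semidef :: "complex^'n^'n \<Rightarrow> bool" where
  "pos_semidef A \<longleftrightarrow> hermitian A \<and> (\<forall>x. Re (cinner x (A *v x)) \<ge> 0)"

definition msqrt :: "complex^'n^'n \<Rightarrow> complex^'n^'n" where
  "msqrt A = (THE S. pos_semidef S \<and> S ** S = A)"

definition spec_norm :: "complex^'n^'m \<Rightarrow> real" where
  "spec_norm A = onorm (\<lambda>x. A *v x)"

text \<open>Density of CN(0, s I) on complex^'n (viewed as R^{2n} with Lebesgue measure).\<close>
definition cgauss_density :: "real \<Rightarrow> complex^'n \<Rightarrow> real" where
  "cgauss_density s z = exp (- (norm z)\<^sup>2 / s) / (pi * s) ^ CARD('n)"

definition CN :: "real \<Rightarrow> (complex^'n) measure" where
  "CN s = density lborel (\<lambda>z. ennreal (cgauss_density s z))"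

text \<open>Joint law of the mutually independent (g_b, u, n_p).\<close>
definition input_space :: "real \<Rightarrow> ((complex^'n) \<times> (complex^'n) \<times> (complex^'n)) measure" where
  "input_space sigma2 = CN 1 \<Otimes>\<^sub>M (CN 1 \<Otimes>\<^sub>M CN sigma2)"

definition h_b :: "real \<Rightarrow> complex^'n^'n \<Rightarrow> complex^'n \<Rightarrow> complex^'n" where
  "h_b bb Rb g = complex_of_real (sqrt bb) *s (msqrt Rb *v g)"

definition g_e :: "complex^'n^'n \<Rightarrow> real \<Rightarrow> complex^'n \<Rightarrow> complex^'n \<Rightarrow> complex^'n" where
  "g_e C rho g u = complex_of_real rho *s (C *v g) + complex_of_real (sqrt (1 - rho\<^sup>2)) *s u"

definition h_e :: "real \<Rightarrow> complex^'n^'n \<Rightarrow> complex^'n^'n \<Rightarrow> real \<Rightarrow> complex^'n \<Rightarrow> complex^'n \<Rightarrow> complex^'n" where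
  "h_e be Reve C rho g u = complex_of_real (sqrt be) *s (msqrt Reve *v g_e C rho g u)"

definition y_p :: "real \<Rightarrow> real \<Rightarrow> real \<Rightarrow> complex^'n^'n \<Rightarrow> complex^'n \<Rightarrow> complex^'n \<Rightarrow> complex^'n" where
  "y_p tp rp bb Rb g n = complex_of_real (sqrt (tp * rp)) *s h_b bb Rb g + n"

definition R_h :: "real \<Rightarrow> complex^'n^'n \<Rightarrow> complex^'n^'n" where
  "R_h bb Rb = cmat_scale (complex_of_real bb) Rb"

definition K_inv :: "real \<Rightarrow> real \<Rightarrow> real \<Rightarrow> real \<Rightarrow> complex^'n^'n \<Rightarrow> complex^'n^'n" where
  "K_inv sigma2 tp rp bb Rb =
     matrix_inv (cmat_scale (complex_of_real (tp * rp)) (R_h bb Rb) + cmat_scale (complex_of_real sigma2) (mat 1))"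

text \<open>MMSE estimate of h_b.\<close>
definition h_hat :: "real \<Rightarrow> real \<Rightarrow> real \<Rightarrow> real \<Rightarrow> complex^'n^'n \<Rightarrow> complex^'n \<Rightarrow> complex^'n \<Rightarrow> complex^'n" where
  "h_hat sigma2 tp rp bb Rb g n =
     complex_of_real (sqrt (tp * rp)) *s ((R_h bb Rb ** K_inv sigma2 tp rp bb Rb) *v y_p tp rp bb Rb g n)"

text \<open>Estimation error covariance.\<close>
definition R_tilde :: "real \<Rightarrow> real \<Rightarrow> real \<Rightarrow> real \<Rightarrow> complex^'n^'n \<Rightarrow> complex^'n^'n" where
  "R_tilde sigma2 tp rp bb Rb =
     R_h bb Rb - cmat_scale (complex_of_real (tp * rp)) (R_h bb Rb ** K_inv sigma2 tp rp bb Rb ** R_h bb Rb)"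

definition beam :: "complex^'n \<Rightarrow> complex^'n" where
  "beam h = complex_of_real (1 / norm h) *s h"

section \<open>SINRs (w^H R w and tr(V^H R V) are real for Hermitian R; Re just makes the type real)\<close>

definition gamma_b :: "real \<Rightarrow> complex^'n^'n \<Rightarrow> (complex^'n \<Rightarrow> complex^'k^'n) \<Rightarrow> real \<Rightarrow> real \<Rightarrow> complex^'n \<Rightarrow> real" where
  "gamma_b sigma2 Rt V Ps Pa hh =
     Ps * (norm hh)\<^sup>2 /
     (Ps * Re (cinner (beam hh) (Rt *v beam hh)) + Pa * Re (trace (ctrans (V hh) ** Rt ** V hh)) + sigma2)"

definition gamma_e :: "real \<Rightarrow> (complex^'n \<Rightarrow> complex^'k^'n) \<Rightarrow> real \<Rightarrow> real \<Rightarrow> complex^'n \<Rightarrow> complex^'n \<Rightarrow> real" where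
  "gamma_e sigma2 V Ps Pa hh he =
     Ps * (cmod (cinner he (beam hh)))\<^sup>2 / (Pa * (norm (ctrans (V hh) *v he))\<^sup>2 + sigma2)"

definition gamma_b_inf :: "complex^'n^'n \<Rightarrow> (complex^'n \<Rightarrow> complex^'k^'n) \<Rightarrow> real \<Rightarrow> complex^'n \<Rightarrow> real" where
  "gamma_b_inf Rt V theta hh =
     (1 - theta) * (norm hh)\<^sup>2 /
     ((1 - theta) * Re (cinner (beam hh) (Rt *v beam hh)) + theta * Re (trace (ctrans (V hh) ** Rt ** V hh)))"

definition gamma_e_inf :: "(complex^'n \<Rightarrow> complex^'k^'n) \<Rightarrow> real \<Rightarrow> complex^'n \<Rightarrow> complex^'n \<Rightarrow> real" where
  "gamma_e_inf V theta hh he =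
     (1 - theta) * (cmod (cinner he (beam hh)))\<^sup>2 / (theta * (norm (ctrans (V hh) *v he))\<^sup>2)"

definition esr_of ::
  "real \<Rightarrow> real \<Rightarrow> real \<Rightarrow> real \<Rightarrow> real \<Rightarrow> complex^'n^'n \<Rightarrow> complex^'n^'n \<Rightarrow> complex^'n^'n \<Rightarrow> real \<Rightarrow> real
   \<Rightarrow> (complex^'n \<Rightarrow> real) \<Rightarrow> (complex^'n \<Rightarrow> complex^'n \<Rightarrow> real) \<Rightarrow> ennreal" where
  "esr_of sigma2 tp rp Tc bb Rb Reve C rho be gb ge =
     ennreal (1 - tp / Tc) *
     (\<integral>\<^sup>+ \<omega>. ennreal (max 0
        (log 2 (1 + gb (h_hat sigma2 tp rp bb Rb (fst \<omega>) (snd (snd \<omega>))))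
         - log 2 (1 + ge (h_hat sigma2 tp rp bb Rb (fst \<omega>) (snd (snd \<omega>)))
                          (h_e be Reve C rho (fst \<omega>) (fst (snd \<omega>))))))
      \<partial>input_space sigma2)"

definition ergodic_secrecy_rate ::
  "real \<Rightarrow> real \<Rightarrow> real \<Rightarrow> real \<Rightarrow> real \<Rightarrow> complex^'n^'n \<Rightarrow> complex^'n^'n \<Rightarrow> complex^'n^'n \<Rightarrow> real \<Rightarrow> real
   \<Rightarrow> (complex^'n \<Rightarrow> complex^'k^'n) \<Rightarrow> real \<Rightarrow> real \<Rightarrow> ennreal" where
  "ergodic_secrecy_rate sigma2 tp rp Tc bb Rb Reve C rho be V Ps Pa =
     esr_of sigma2 tp rp Tc bb Rb Reve C rho be
       (gamma_b sigma2 (R_tilde sigma2 tp rp bb Rb) V Ps Pa)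
       (gamma_e sigma2 V Ps Pa)"

definition ergodic_secrecy_rate_inf ::
  "real \<Rightarrow> real \<Rightarrow> real \<Rightarrow> real \<Rightarrow> real \<Rightarrow> complex^'n^'n \<Rightarrow> complex^'n^'n \<Rightarrow> complex^'n^'n \<Rightarrow> real \<Rightarrow> real
   \<Rightarrow> (complex^'n \<Rightarrow> complex^'k^'n) \<Rightarrow> real \<Rightarrow> ennreal" where
  "ergodic_secrecy_rate_inf sigma2 tp rp Tc bb Rb Reve C rho be V theta =
     esr_of sigma2 tp rp Tc bb Rb Reve C rho be
       (gamma_b_inf (R_tilde sigma2 tp rp bb Rb) V theta)
       (gamma_e_inf V theta)"

end

theory Submission
  imports Defs "HOL-Probability.Probability"
begin

lemma cinner_add_right: "cinner x (y + z) = cinner x y + cinner x z"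
  by (simp add: cinner_def distrib_left sum.distrib)
lemma cinner_add_left: "cinner (x + y) z = cinner x z + cinner y z"
  by (simp add: cinner_def distrib_right sum.distrib)
lemma cinner_diff_right: "cinner x (y - z) = cinner x y - cinner x z"
  by (simp add: cinner_def right_diff_distrib sum_subtractf)
lemma cinner_diff_left: "cinner (x - y) z = cinner x z - cinner y z"
  by (simp add: cinner_def left_diff_distrib sum_subtractf)
lemma cinner_scale_right: "cinner x (c *s y) = c * cinner x y"
  by (simp add: cinner_def sum_distrib_left mult.left_commute)
lemma cinner_scale_left: "cinner (c *s x) y = cnj c * cinner x y"
  by (simp add: cinner_def sum_distrib_left mult.assoc)
lemma cinner_zero_right[simp]: "cinner x 0 = 0" by (simp add: cinner_def)
lemma cinner_zero_left[simp]: "cinner 0 x = 0" by (simp add: cinner_def)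
lemma cinner_commute: "cinner y x = cnj (cinner x y)"
  by (simp add: cinner_def mult.commute)
lemma cinner_sum_right: "cinner x (sum f A) = (\<Sum>a\<in>A. cinner x (f a))"
  by (induction A rule: infinite_finite_induct) (auto simp: cinner_add_right)
lemma cinner_sum_left: "cinner (sum f A) x = (\<Sum>a\<in>A. cinner (f a) x)"
  by (induction A rule: infinite_finite_induct) (auto simp: cinner_add_left)

lemma Re_cinner: "Re (cinner x y) = inner x y"
  by (simp add: cinner_def inner_vec_def inner_complex_def Re_sum)

lemma cinner_self: "cinner x x = complex_of_real ((norm x)\<^sup>2)"
proof -
  have "cinner x x = (\<Sum>i\<in>UNIV. complex_of_real ((cmod (x $ i))\<^sup>2))"
    unfolding cinner_def by (intro sum.cong refl) (metis complex_norm_square of_real_power mult.commute)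
  also have "\<dots> = complex_of_real (\<Sum>i\<in>UNIV. (cmod (x $ i))\<^sup>2)" by simp
  also have "(\<Sum>i\<in>UNIV. (cmod (x $ i))\<^sup>2) = (norm x)\<^sup>2"
    by (simp add: norm_vec_def L2_set_def sum_nonneg)
  finally show ?thesis .
qed

lemma Re_cinner_self: "Re (cinner x x) = (norm x)\<^sup>2"
  by (simp add: cinner_self)

lemma cinner_self_eq_0: "cinner x x = 0 \<longleftrightarrow> x = 0"
  by (simp add: cinner_self)

lemma cinner_mat: "cinner x (M *v y) = cinner (ctrans M *v x) y"
proof -
  have "cinner x (M *v y) = (\<Sum>i\<in>UNIV. \<Sum>j\<in>UNIV. cnj (x $ i) * (M $ i $ j * y $ j))"
    by (simp add: cinner_def matrix_vector_mult_def sum_distrib_left)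
  also have "\<dots> = (\<Sum>j\<in>UNIV. \<Sum>i\<in>UNIV. cnj (x $ i) * (M $ i $ j * y $ j))"
    by (rule sum.swap)
  also have "\<dots> = cinner (ctrans M *v x) y"
    by (simp add: cinner_def matrix_vector_mult_def ctrans_def sum_distrib_right sum_distrib_left mult_ac)
  finally show ?thesis .
qed

lemma hermitian_cinner: "hermitian A \<Longrightarrow> cinner x (A *v y) = cinner (A *v x) y"
  by (simp add: cinner_mat hermitian_def)

lemma hermitian_quad_real: "hermitian A \<Longrightarrow> Im (cinner x (A *v x)) = 0"
proof -
  assume h: "hermitian A"
  have "cinner x (A *v x) = cnj (cinner x (A *v x))"
    using hermitian_cinner[OF h, of x x] cinner_commute[of x "A *v x"] by simp
  then show ?thesis by (metis Reals_cnj_iff complex_is_Real_iff)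
qed

lemma mat_scalar: "M *v (c *s x) = c *s (M *v x)"
  for M :: "complex^'n^'m" by (rule vector_scalar_commute)

lemma mat_sum: "M *v (sum f A) = (\<Sum>a\<in>A. M *v f a)"
  for M :: "complex^'n^'m"
  by (induction A rule: infinite_finite_induct) (auto simp: matrix_vector_right_distrib)

lemma pos_def_inj:
  assumes "pos_def A" "A *v x = 0" shows "x = 0"
  using assms unfolding pos_def_def by force

lemma inj_imp_invertible:
  fixes A :: "complex^'n^'n"
  assumes "\<And>x. A *v x = 0 \<Longrightarrow> x = 0"
  shows "invertible A"
proof -
  have lin: "Vector_Spaces.linear (*s) (*s) ((*v) A)" by (rule matrix_vector_mul_linear_gen)
  have "inj ((*v) A)"
    unfolding inj_def by (metis assms eq_iff_diff_eq_0 matrix_vector_mult_diff_distrib)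
  then have "surj ((*v) A)" using vec.linear_inj_imp_surj[OF lin] by simp
  then obtain B where "A ** B = mat 1" using matrix_right_invertible_surjective by blast
  then show ?thesis using invertible_right_inverse by blast
qed

lemma inj_imp_surj:
  fixes A :: "complex^'n^'n"
  assumes "\<And>x. A *v x = 0 \<Longrightarrow> x = 0"
  shows "\<exists>x. A *v x = y"
proof -
  have lin: "Vector_Spaces.linear (*s) (*s) ((*v) A)" by (rule matrix_vector_mul_linear_gen)
  have "inj ((*v) A)"
    unfolding inj_def by (metis assms eq_iff_diff_eq_0 matrix_vector_mult_diff_distrib)
  then have "surj ((*v) A)" using vec.linear_inj_imp_surj[OF lin] by simp
  then show ?thesis by (metis surjD)
qed

lemma matrix_inv_works:
  fixes A :: "complex^'n^'n"
  assumes "invertible A"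
  shows "A ** matrix_inv A = mat 1" "matrix_inv A ** A = mat 1"
  using assms unfolding invertible_def matrix_inv_def by (metis (mono_tags, lifting) someI_ex)+

lemma norm_cscale: "norm (c *s x) = cmod c * norm (x::complex^'n)"
proof -
  have "norm (c *s x) = L2_set (\<lambda>i. cmod c * cmod (x $ i)) UNIV"
    by (simp add: norm_vec_def norm_mult)
  also have "\<dots> = cmod c * L2_set (\<lambda>i. cmod (x $ i)) UNIV"
    by (simp add: L2_set_right_distrib)
  finally show ?thesis by (simp add: norm_vec_def)
qed

lemma cont_cinner[continuous_intros]:
  "continuous_on S f \<Longrightarrow> continuous_on S g \<Longrightarrow> continuous_on S (\<lambda>x. cinner (f x) (g x))"
  unfolding cinner_def by (intro continuous_intros continuous_on_component)

lemma cont_mv[continuous_intros]: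
  fixes M :: "complex^'n^'m"
  shows "continuous_on S f \<Longrightarrow> continuous_on S (\<lambda>x. M *v f x)"
  unfolding matrix_vector_mult_def
  by (intro continuous_on_vec_lambda continuous_intros continuous_on_component)

lemma onb_coeff:
  assumes "finite E" "\<forall>e\<in>E. cinner e e = 1" "\<forall>e\<in>E. \<forall>f\<in>E. e \<noteq> f \<longrightarrow> cinner e f = 0"
    and "f \<in> E"
  shows "cinner f (\<Sum>e\<in>E. c e *s e) = c f"
proof -
  have "cinner f (\<Sum>e\<in>E. c e *s e) = (\<Sum>e\<in>E. c e * cinner f e)"
    by (simp add: cinner_sum_right cinner_scale_right)
  also have "\<dots> = (\<Sum>e\<in>E. if e = f then c f else 0)"
    using assms by (intro sum.cong refl) auto
  also have "\<dots> = c f" using assms by simp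
  finally show ?thesis .
qed

lemma eig_extend:
  fixes A :: "complex^'n^'n"
  assumes h: "hermitian A" and fin: "finite E"
    and on1: "\<forall>e\<in>E. cinner e e = 1" and on0: "\<forall>e\<in>E. \<forall>f\<in>E. e \<noteq> f \<longrightarrow> cinner e f = 0"
    and eig: "\<forall>e\<in>E. A *v e = complex_of_real (lam e) *s e"
    and x: "x \<noteq> (\<Sum>e\<in>E. cinner e x *s e)"
  shows "\<exists>v l. cinner v v = 1 \<and> (\<forall>e\<in>E. cinner e v = 0) \<and> A *v v = complex_of_real l *s v"
proof -
  define S where "S = {y. \<forall>e\<in>E. cinner e y = 0}"
  have Sadd: "y + z \<in> S" if "y \<in> S" "z \<in> S" for y z
    using that by (simp add: S_def cinner_add_right)
  have Sdiff: "y - z \<in> S" if "y \<in> S" "z \<in> S" for y z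
    using that by (simp add: S_def cinner_diff_right)
  have Sscale: "c *s y \<in> S" if "y \<in> S" for y c
    using that by (simp add: S_def cinner_scale_right)
  have SA: "A *v y \<in> S" if "y \<in> S" for y
  proof -
    { fix e assume e: "e \<in> E"
      have "cinner e (A *v y) = cinner (A *v e) y" by (rule hermitian_cinner[OF h])
      also have "\<dots> = 0" using e eig that by (simp add: S_def cinner_scale_left) 
      finally have "cinner e (A *v y) = 0" . }
    then show ?thesis by (simp add: S_def)
  qed
  define r where "r = x - (\<Sum>e\<in>E. cinner e x *s e)"
  have rS: "r \<in> S"
    unfolding S_def r_def using onb_coeff[OF fin on1 on0] by (auto simp: cinner_diff_right)
  have r0: "r \<noteq> 0" using x by (simp add: r_def)
  define q where "q y = Re (cinner y (A *v y))" for y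
  have qcont: "continuous_on UNIV q" unfolding q_def
    by (intro continuous_intros)
  define K where "K = S \<inter> sphere 0 1"
  have closedS: "closed S"
  proof -
    have "S = (\<Inter>e\<in>E. {y. cinner e y = 0})" by (auto simp: S_def)
    moreover have "closed {y. cinner e y = 0}" for e
      by (intro closed_Collect_eq continuous_intros)
    ultimately show ?thesis by auto
  qed
  have compK: "compact K" unfolding K_def
    by (intro closed_Int_compact closedS compact_sphere)
  define r1 where "r1 = complex_of_real (1 / norm r) *s r"
  have r1K: "r1 \<in> K" using r0 rS Sscale
    by (simp add: K_def r1_def norm_cscale norm_divide)
  obtain v where vK: "v \<in> K" and vmax: "\<And>y. y \<in> K \<Longrightarrow> q y \<le> q v"
    using continuous_attains_sup[OF compK _ continuous_on_subset[OF qcont]] r1K by blast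
  define l where "l = q v"
  have vS: "v \<in> S" and vn: "norm v = 1" using vK by (auto simp: K_def)
  have vv: "cinner v v = 1" using vn by (simp add: cinner_self)
  have qscale: "q (complex_of_real c *s y) = c\<^sup>2 * q y" for c y
    by (simp add: q_def mat_scalar cinner_scale_left cinner_scale_right power2_eq_square)
  have qle: "q p \<le> l * (norm p)\<^sup>2" if "p \<in> S" for p
  proof (cases "p = 0")
    case True then show ?thesis by (simp add: q_def)
  next
    case False
    define p1 where "p1 = complex_of_real (1 / norm p) *s p"
    have "p1 \<in> K" using False that Sscale by (simp add: K_def p1_def norm_cscale norm_divide)
    then have "q p1 \<le> l" using vmax l_def by simp
    moreover have "q p1 = q p / (norm p)\<^sup>2" unfolding p1_def qscale
      by (simp add: power2_eq_square)
    ultimately show ?thesis using False by (simp add: field_simps)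
  qed
  have qreal: "cinner y (A *v y) = complex_of_real (q y)" for y
    using hermitian_quad_real[OF h, of y] by (simp add: q_def complex_eq_iff)
  have key: "cinner y (A *v v) = 0" if yS: "y \<in> S" and yv: "cinner v y = 0" for y
  proof (rule ccontr)
    assume a0: "cinner y (A *v v) \<noteq> 0"
    define a where "a = cinner y (A *v v)"
    have yv': "cinner y v = 0" using yv cinner_commute[of v y] by simp
    have avy: "cinner v (A *v y) = cnj a"
      unfolding a_def using hermitian_cinner[OF h, of v y] cinner_commute[of y "A *v v"] by simp
    define C where "C = l * (norm y)\<^sup>2 - q y"
    have na: "(cmod a)\<^sup>2 > 0" using a0 by (simp add: a_def)
    have ineq: "2 * s * (cmod a)\<^sup>2 \<le> s\<^sup>2 * (cmod a)\<^sup>2 * C" if s: "s > 0" for s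
    proof -
      define t where "t = complex_of_real s * a"
      define p where "p = v + t *s y"
      have pS: "p \<in> S" unfolding p_def by (intro Sadd Sscale vS yS)
      have np: "(norm p)\<^sup>2 = 1 + s\<^sup>2 * (cmod a)\<^sup>2 * (norm y)\<^sup>2"
      proof -
        have "complex_of_real ((norm p)\<^sup>2) = cinner p p" by (simp add: cinner_self)
        also have "\<dots> = cinner v v + t * cinner v y + cnj t * cinner y v + cnj t * t * cinner y y"
          unfolding p_def by (simp add: cinner_add_left cinner_add_right cinner_scale_left cinner_scale_right algebra_simps)
        also have "\<dots> = complex_of_real (1 + s\<^sup>2 * (cmod a)\<^sup>2 * (norm y)\<^sup>2)"
          using vv yv yv' unfolding t_def cinner_self
          by (simp add: complex_norm_square[symmetric] power2_eq_square mult_ac)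
        finally show ?thesis by (simp only: of_real_eq_iff)
      qed
      have qp: "q p = l + 2 * s * (cmod a)\<^sup>2 + s\<^sup>2 * (cmod a)\<^sup>2 * q y"
      proof -
        have "complex_of_real (q p) = cinner p (A *v p)" by (simp add: qreal)
        also have "\<dots> = cinner v (A *v v) + t * cinner v (A *v y) + cnj t * cinner y (A *v v)
                         + cnj t * t * cinner y (A *v y)"
          unfolding p_def by (simp add: matrix_vector_right_distrib mat_scalar cinner_add_left
              cinner_add_right cinner_scale_left cinner_scale_right algebra_simps)
        also have "\<dots> = complex_of_real l + (complex_of_real s * (a * cnj a)) * 2
             + (complex_of_real s)\<^sup>2 * (a * cnj a) * complex_of_real (q y)"
          unfolding t_def avy l_def qreal a_def[symmetric]
          by (simp add: power2_eq_square algebra_simps)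
        also have "\<dots> = complex_of_real (l + 2 * s * (cmod a)\<^sup>2 + s\<^sup>2 * (cmod a)\<^sup>2 * q y)"
          unfolding complex_norm_square[symmetric] by simp
        finally show ?thesis by (simp only: of_real_eq_iff)
      qed
      from qle[OF pS] show ?thesis unfolding np qp C_def by (simp add: algebra_simps)
    qed
    define s where "s = 1 / (\<bar>C\<bar> + 1)"
    have s0: "s > 0" by (simp add: s_def add_pos_nonneg)
    have "s * C < 1"
    proof -
      have "s * C \<le> s * \<bar>C\<bar>" using s0 by (simp add: mult_left_mono)
      also have "\<dots> < 1" using s0 by (simp add: s_def field_simps)
      finally show ?thesis .
    qed
    moreover have "2 * s * (cmod a)\<^sup>2 \<le> s\<^sup>2 * (cmod a)\<^sup>2 * C" by (rule ineq[OF s0])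
    then have "(s * (cmod a)\<^sup>2) * 2 \<le> (s * (cmod a)\<^sup>2) * (s * C)"
      by (simp add: power2_eq_square algebra_simps)
    then have "2 \<le> s * C" using s0 na mult_le_cancel_left_pos[of "s * (cmod a)\<^sup>2" 2 "s * C"]
      by simp
    ultimately show False by simp
  qed
  define z where "z = A *v v - complex_of_real l *s v"
  have zS: "z \<in> S" unfolding z_def by (intro Sdiff SA Sscale vS)
  have vz: "cinner v z = 0"
    unfolding z_def using vv by (simp add: cinner_diff_right cinner_scale_right qreal l_def)
  have zv: "cinner z v = 0" using vz cinner_commute[of v z] by simp
  have "cinner z (A *v v) = cinner z z + complex_of_real l * cinner z v"
    unfolding z_def[symmetric] by (simp add: z_def cinner_diff_right cinner_scale_right)
  then have "cinner z z = 0" using key[OF zS vz] zv by simp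
  then have "z = 0" by (simp add: cinner_self_eq_0)
  then have "A *v v = complex_of_real l *s v" by (simp add: z_def)
  moreover have "\<forall>e\<in>E. cinner e v = 0" using vS by (simp add: S_def)
  ultimately show ?thesis using vv by blast
qed

lemma orthonormal_card:
  fixes E :: "(complex^'n) set"
  assumes on1: "\<forall>e\<in>E. cinner e e = 1" and on0: "\<forall>e\<in>E. \<forall>f\<in>E. e \<noteq> f \<longrightarrow> cinner e f = 0"
  shows "card E \<le> DIM(complex^'n)"
proof -
  have "pairwise orthogonal E"
    unfolding pairwise_def orthogonal_def using on0 by (metis Re_cinner zero_complex.sel(1))
  moreover have "0 \<notin> E" using on1 by force
  ultimately have "independent E" by (rule pairwise_orthogonal_independent)
  then show ?thesis using independent_bound by blast
qed

lemma spectral: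
  fixes A :: "complex^'n^'n"
  assumes h: "hermitian A"
  shows "\<exists>E lam. finite E \<and> (\<forall>e\<in>E. cinner e e = 1) \<and> (\<forall>e\<in>E. \<forall>f\<in>E. e \<noteq> f \<longrightarrow> cinner e f = 0)
     \<and> (\<forall>e\<in>E. A *v e = complex_of_real (lam e) *s e) \<and> (\<forall>x. x = (\<Sum>e\<in>E. cinner e x *s e))"
proof -
  define P where "P n \<longleftrightarrow> (\<exists>E lam. card E = n \<and> finite E \<and> (\<forall>e\<in>E. cinner e e = 1)
     \<and> (\<forall>e\<in>E. \<forall>f\<in>E. e \<noteq> f \<longrightarrow> cinner e f = 0) \<and> (\<forall>e\<in>E. A *v e = complex_of_real (lam e) *s e))" for n
  have P0: "P 0" unfolding P_def by (rule exI[of _ "{}"]) simp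
  have Pb: "\<forall>y. P y \<longrightarrow> y \<le> DIM(complex^'n)"
    unfolding P_def using orthonormal_card by blast
  obtain n where Pn: "P n" and nmax: "\<And>y. P y \<Longrightarrow> y \<le> n"
    using Nat.ex_has_greatest_nat[of P 0 "DIM(complex^'n)", OF P0 Pb] by blast
  from Pn obtain E lam where E: "card E = n" "finite E" "\<forall>e\<in>E. cinner e e = 1"
     "\<forall>e\<in>E. \<forall>f\<in>E. e \<noteq> f \<longrightarrow> cinner e f = 0" "\<forall>e\<in>E. A *v e = complex_of_real (lam e) *s e"
    unfolding P_def by blast
  have "\<forall>x. x = (\<Sum>e\<in>E. cinner e x *s e)"
  proof (rule ccontr)
    assume "\<not> ?thesis"
    then obtain x where x: "x \<noteq> (\<Sum>e\<in>E. cinner e x *s e)" by blast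
    obtain v l where v: "cinner v v = 1" "\<forall>e\<in>E. cinner e v = 0" "A *v v = complex_of_real l *s v"
      using eig_extend[OF h E(2) E(3) E(4) E(5) x] by blast
    have vE: "v \<notin> E" using v by force
    define E' where "E' = insert v E"
    define lam' where "lam' = lam(v := l)"
    have "P (Suc n)" unfolding P_def
    proof (intro exI conjI)
      show "card E' = Suc n" using E vE by (simp add: E'_def)
      show "finite E'" using E by (simp add: E'_def)
      show "\<forall>e\<in>E'. cinner e e = 1" using E v by (simp add: E'_def)
      show "\<forall>e\<in>E'. \<forall>f\<in>E'. e \<noteq> f \<longrightarrow> cinner e f = 0"
        using E v by (auto simp: E'_def) (metis cinner_commute complex_cnj_zero)
      show "\<forall>e\<in>E'. A *v e = complex_of_real (lam' e) *s e"
        using E v vE by (auto simp: E'_def lam'_def)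
    qed
    then show False using nmax by fastforce
  qed
  then show ?thesis using E by blast
qed

lemma psd_sqrt_ex1:
  fixes A :: "complex^'n^'n"
  assumes pd: "pos_def A"
  shows "\<exists>!S. pos_semidef S \<and> S ** S = A"
proof -
  have h: "hermitian A" using pd by (simp add: pos_def_def)
  obtain E lam where fin: "finite E" and on1: "\<forall>e\<in>E. cinner e e = 1"
    and on0: "\<forall>e\<in>E. \<forall>f\<in>E. e \<noteq> f \<longrightarrow> cinner e f = 0"
    and eig: "\<forall>e\<in>E. A *v e = complex_of_real (lam e) *s e"
    and span: "\<forall>x. x = (\<Sum>e\<in>E. cinner e x *s e)"
    using spectral[OF h] by blast
  have lampos: "lam e > 0" if e: "e \<in> E" for e
  proof -
    have "e \<noteq> 0" using on1 e by force
    then have "Re (cinner e (A *v e)) > 0" using pd by (simp add: pos_def_def)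
    moreover have "cinner e (A *v e) = complex_of_real (lam e)"
      using eig on1 e by (simp add: cinner_scale_right)
    ultimately show ?thesis by simp
  qed
  define sq where "sq e = complex_of_real (sqrt (lam e))" for e
  define S :: "complex^'n^'n" where "S = (\<chi> i j. \<Sum>e\<in>E. sq e * e $ i * cnj (e $ j))"
  have Sv: "S *v x = (\<Sum>e\<in>E. (sq e * cinner e x) *s e)" for x
  proof -
    have "(S *v x) $ i = (\<Sum>e\<in>E. (sq e * cinner e x) * e $ i)" for i
    proof -
      have "(S *v x) $ i = (\<Sum>j\<in>UNIV. \<Sum>e\<in>E. sq e * e $ i * cnj (e $ j) * x $ j)"
        by (simp add: S_def matrix_vector_mult_def sum_distrib_right)
      also have "\<dots> = (\<Sum>e\<in>E. \<Sum>j\<in>UNIV. sq e * e $ i * cnj (e $ j) * x $ j)"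
        by (rule sum.swap)
      also have "\<dots> = (\<Sum>e\<in>E. (sq e * cinner e x) * e $ i)"
        by (simp add: cinner_def sum_distrib_left sum_distrib_right mult_ac)
      finally show ?thesis .
    qed
    then show ?thesis by (simp add: vec_eq_iff sum_component)
  qed
  have Se: "S *v e = sq e *s e" if "e \<in> E" for e
  proof -
    have "S *v e = (\<Sum>f\<in>E. if f = e then sq e *s e else 0)"
      unfolding Sv using that on1 on0 by (intro sum.cong refl) auto
    also have "\<dots> = sq e *s e" using fin that by simp
    finally show ?thesis .
  qed
  have cnjsq: "cnj (sq e) = sq e" for e by (simp add: sq_def)
  have sqsq: "sq e * sq e = complex_of_real (lam e)" if "e \<in> E" for e
  proof -
    have "sq e * sq e = complex_of_real (sqrt (lam e) * sqrt (lam e))"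
      unfolding sq_def of_real_mult ..
    also have "sqrt (lam e) * sqrt (lam e) = lam e" using lampos[OF that] by simp
    finally show ?thesis .
  qed
  have herm: "hermitian S"
    by (simp add: hermitian_def ctrans_def S_def vec_eq_iff cnjsq mult_ac)
  have psd: "pos_semidef S"
  proof -
    have "Re (cinner x (S *v x)) \<ge> 0" for x
    proof -
      have "Re (cinner x (S *v x)) = (\<Sum>e\<in>E. sqrt (lam e) * (cmod (cinner e x))\<^sup>2)"
      proof -
        have "cinner x (S *v x) = (\<Sum>e\<in>E. sq e * (cinner e x * cnj (cinner e x)))"
          unfolding Sv cinner_sum_right cinner_scale_right
          by (intro sum.cong refl) (simp add: cinner_commute[of x] mult_ac)
        then show ?thesis by (simp add: Re_sum sq_def complex_norm_square[symmetric] del: of_real_power)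
      qed
      also have "\<dots> \<ge> 0" using lampos by (intro sum_nonneg) (simp add: less_imp_le)
      finally show ?thesis .
    qed
    then show ?thesis using herm by (simp add: pos_semidef_def)
  qed
  have Ax: "A *v x = (\<Sum>e\<in>E. (complex_of_real (lam e) * cinner e x) *s e)" for x
  proof -
    have "A *v x = A *v (\<Sum>e\<in>E. cinner e x *s e)" using span by metis
    also have "\<dots> = (\<Sum>e\<in>E. (complex_of_real (lam e) * cinner e x) *s e)"
      unfolding mat_sum mat_scalar using eig by (intro sum.cong refl) (simp add: mult_ac)
    finally show ?thesis .
  qed
  have SS: "S ** S = A"
  proof (subst matrix_eq, intro allI)
    fix x
    have "(S ** S) *v x = S *v (S *v x)" by (simp add: matrix_vector_mul_assoc)
    also have "\<dots> = (\<Sum>e\<in>E. (sq e * cinner e x) *s (sq e *s e))"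
      unfolding Sv[of x] mat_sum mat_scalar using Se by (intro sum.cong refl) simp
    also have "\<dots> = A *v x" unfolding Ax
    proof (intro sum.cong refl)
      fix e assume e: "e \<in> E"
      have "(sq e * cinner e x) *s (sq e *s e) = ((sq e * sq e) * cinner e x) *s e"
        by (simp add: vector_smult_assoc mult_ac)
      then show "(sq e * cinner e x) *s (sq e *s e) = (complex_of_real (lam e) * cinner e x) *s e"
        using sqsq[OF e] by simp
    qed
    finally show "(S ** S) *v x = A *v x" .
  qed
  have uniq: "T = S" if T: "pos_semidef T" "T ** T = A" for T
  proof -
    have Te: "T *v e = sq e *s e" if e: "e \<in> E" for e
    proof -
      define y where "y = T *v e - sq e *s e"
      have t1: "T *v y = T *v (T *v e) - sq e *s (T *v e)"
        by (simp add: y_def matrix_vector_mult_diff_distrib mat_scalar)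
      have t2: "sq e *s y = sq e *s (T *v e) - (sq e * sq e) *s e"
        by (simp add: y_def vector_ssub_ldistrib vector_smult_assoc)
      have "T *v y + sq e *s y = T *v (T *v e) - (sq e * sq e) *s e"
        unfolding t1 t2 by simp
      also have "\<dots> = 0" using T(2) eig e sqsq[OF e]
        by (simp add: matrix_vector_mul_assoc)
      finally have 0: "T *v y + sq e *s y = 0" .
      have "0 = Re (cinner y (T *v y + sq e *s y))" by (simp add: 0)
      also have "\<dots> = Re (cinner y (T *v y)) + sqrt (lam e) * (norm y)\<^sup>2"
        by (simp add: cinner_add_right cinner_scale_right sq_def cinner_self)
      finally have "sqrt (lam e) * (norm y)\<^sup>2 \<le> 0"
        using T(1) by (simp add: pos_semidef_def) (smt (verit))
      then have "norm y = 0" using lampos[OF e]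
        by (smt (verit) mult_pos_pos real_sqrt_gt_zero zero_less_power2)
      then show ?thesis by (simp add: y_def)
    qed
    show ?thesis
    proof (subst matrix_eq, intro allI)
      fix x
      have "T *v x = T *v (\<Sum>e\<in>E. cinner e x *s e)" using span by metis
      also have "\<dots> = (\<Sum>e\<in>E. (sq e * cinner e x) *s e)"
        unfolding mat_sum mat_scalar using Te by (intro sum.cong refl) (simp add: mult_ac)
      also have "\<dots> = S *v x" by (simp add: Sv)
      finally show "T *v x = S *v x" .
    qed
  qed
  show ?thesis using psd SS uniq by blast
qed

lemma msqrt_props:
  fixes A :: "complex^'n^'n"
  assumes pd: "pos_def A"
  shows "pos_semidef (msqrt A)" "msqrt A ** msqrt A = A"
proof -
  have "pos_semidef (msqrt A) \<and> msqrt A ** msqrt A = A"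
    unfolding msqrt_def by (rule theI'[OF psd_sqrt_ex1[OF pd]])
  then show "pos_semidef (msqrt A)" "msqrt A ** msqrt A = A" by auto
qed

lemma msqrt_inj:
  fixes A :: "complex^'n^'n"
  assumes pd: "pos_def A" and x: "msqrt A *v x = 0"
  shows "x = 0"
proof -
  have "A *v x = msqrt A *v (msqrt A *v x)"
    using msqrt_props(2)[OF pd] by (simp add: matrix_vector_mul_assoc)
  then have "A *v x = 0" using x by simp
  then show ?thesis using pos_def_inj[OF pd] by blast
qed

lemma cmat_scale_mv: "cmat_scale c A *v x = c *s (A *v x)"
  by (simp add: cmat_scale_def matrix_vector_mult_def vector_scalar_mult_def vec_eq_iff sum_distrib_left mult_ac)

lemma ctrans_cmat_scale: "ctrans (cmat_scale c A) = cmat_scale (cnj c) (ctrans A)"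
  by (simp add: cmat_scale_def ctrans_def vec_eq_iff)

lemma ctrans_ctrans[simp]: "ctrans (ctrans A) = A"
  by (simp add: ctrans_def vec_eq_iff)

lemma cinner_mat': "cinner (M *v x) y = cinner x (ctrans M *v y)"
  using cinner_mat[of x "ctrans M" y] by simp

lemma hermitian_scale: "hermitian A \<Longrightarrow> hermitian (cmat_scale (complex_of_real c) A)"
  by (simp add: hermitian_def ctrans_cmat_scale)

lemma hermitian_add: "hermitian A \<Longrightarrow> hermitian B \<Longrightarrow> hermitian (A + B)"
  by (simp add: hermitian_def ctrans_def vec_eq_iff)

lemma hermitian_id: "hermitian (mat 1 :: complex^'n^'n)"
  by (simp add: hermitian_def ctrans_def vec_eq_iff mat_def)

lemma Rh_herm: "pos_def Rb \<Longrightarrow> hermitian (R_h bb Rb)"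
  unfolding R_h_def by (intro hermitian_scale) (simp add: pos_def_def)

lemma Rh_quad: "Re (cinner x (R_h bb Rb *v x)) = bb * Re (cinner x (Rb *v x))"
  by (simp add: R_h_def cmat_scale_mv cinner_scale_right)

lemma Rh_pos: "pos_def Rb \<Longrightarrow> bb > 0 \<Longrightarrow> x \<noteq> 0 \<Longrightarrow> Re (cinner x (R_h bb Rb *v x)) > 0"
  by (simp add: Rh_quad pos_def_def)

definition KK :: "real \<Rightarrow> real \<Rightarrow> real \<Rightarrow> real \<Rightarrow> complex^'n^'n \<Rightarrow> complex^'n^'n" where
  "KK sigma2 tp rp bb Rb = cmat_scale (complex_of_real (tp * rp)) (R_h bb Rb) + cmat_scale (complex_of_real sigma2) (mat 1)"

lemma KK_mv: "KK sigma2 tp rp bb Rb *v x = complex_of_real (tp * rp) *s (R_h bb Rb *v x) + complex_of_real sigma2 *s x"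
  by (simp add: KK_def matrix_vector_mult_add_rdistrib cmat_scale_mv)

lemma K_inv_KK: "K_inv sigma2 tp rp bb Rb = matrix_inv (KK sigma2 tp rp bb Rb)"
  by (simp add: K_inv_def KK_def)

locale chan =
  fixes Rb :: "complex^'m^'m" and sigma2 tp rp bb :: real
  assumes s2: "sigma2 > 0" and tp: "tp > 0" and rp: "rp > 0" and pdRb: "pos_def Rb" and bb: "bb > 0"
begin

abbreviation "Rh \<equiv> R_h bb Rb"
abbreviation "K \<equiv> KK sigma2 tp rp bb Rb"
abbreviation "Ki \<equiv> K_inv sigma2 tp rp bb Rb"
abbreviation "Rt \<equiv> R_tilde sigma2 tp rp bb Rb"

lemma Rh_h: "hermitian Rh" using Rh_herm[OF pdRb] .

lemma K_h: "hermitian K"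
  unfolding KK_def by (intro hermitian_add hermitian_scale Rh_h hermitian_id)

lemma K_quad: "Re (cinner x (K *v x)) = tp * rp * Re (cinner x (Rh *v x)) + sigma2 * (norm x)\<^sup>2"
  by (simp add: KK_mv cinner_add_right cinner_scale_right cinner_self)

lemma K_inj: "K *v x = 0 \<Longrightarrow> x = 0"
proof (rule ccontr)
  assume "K *v x = 0" "x \<noteq> 0"
  then have "Re (cinner x (K *v x)) = 0" by simp
  moreover have "Re (cinner x (K *v x)) > 0" unfolding K_quad
    using Rh_pos[OF pdRb bb \<open>x \<noteq> 0\<close>] tp rp s2 \<open>x \<noteq> 0\<close>
    by (intro add_pos_pos mult_pos_pos) auto
  ultimately show False by simp
qed

lemma K_invertible: "invertible K" using inj_imp_invertible K_inj by blast

lemma K_Ki: "K *v (Ki *v x) = x" "Ki *v (K *v x) = x"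
  using matrix_inv_works[OF K_invertible]
  by (simp_all add: K_inv_KK matrix_vector_mul_assoc)

lemma Ki_inj: "Ki *v x = 0 \<Longrightarrow> x = 0"
  using K_Ki(1)[of x] by simp

lemma K_Rh_comm: "K *v (Rh *v y) = Rh *v (K *v y)"
  by (simp add: KK_mv matrix_vector_right_distrib mat_scalar)

lemma Ki_Rh: "Ki *v (Rh *v x) = Rh *v (Ki *v x)"
proof -
  define y where "y = Ki *v x"
  have x: "x = K *v y" by (simp add: y_def K_Ki)
  have "Ki *v (Rh *v x) = Ki *v (K *v (Rh *v y))" by (simp add: x K_Rh_comm)
  also have "\<dots> = Rh *v y" by (simp add: K_Ki)
  finally show ?thesis by (simp add: y_def)
qed

lemma Rt_mv: "Rt *v x = complex_of_real sigma2 *s (Rh *v (Ki *v x))"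
proof -
  define y where "y = Ki *v x"
  have x: "x = K *v y" by (simp add: y_def K_Ki)
  have "Rt *v x = Rh *v x - complex_of_real (tp * rp) *s (Rh *v (Ki *v (Rh *v x)))"
    by (simp add: R_tilde_def matrix_vector_mult_diff_rdistrib cmat_scale_mv matrix_vector_mul_assoc[symmetric])
  also have "Ki *v (Rh *v x) = Rh *v y" by (simp add: Ki_Rh y_def)
  also have "Rh *v x = complex_of_real (tp * rp) *s (Rh *v (Rh *v y)) + complex_of_real sigma2 *s (Rh *v y)"
    by (simp add: x KK_mv matrix_vector_right_distrib mat_scalar)
  finally show ?thesis by (simp add: y_def)
qed

lemma Rt_quad_pos: "x \<noteq> 0 \<Longrightarrow> Re (cinner x (Rt *v x)) > 0"
proof -
  assume x0: "x \<noteq> 0"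
  define y where "y = Ki *v x"
  have x: "x = K *v y" by (simp add: y_def K_Ki)
  have y0: "y \<noteq> 0" using x0 x by auto
  have "cinner x (Rt *v x) = complex_of_real sigma2 * cinner (K *v y) (Rh *v y)"
    by (simp add: Rt_mv cinner_scale_right y_def[symmetric] x[symmetric])
  also have "cinner (K *v y) (Rh *v y) = cinner y (K *v (Rh *v y))"
    using hermitian_cinner[OF K_h, of y "Rh *v y"] by simp
  also have "\<dots> = complex_of_real (tp * rp) * cinner (Rh *v y) (Rh *v y) + complex_of_real sigma2 * cinner y (Rh *v y)"
    using hermitian_cinner[OF Rh_h, of y "Rh *v y"]
    by (simp add: KK_mv cinner_add_right cinner_scale_right)
  finally have "Re (cinner x (Rt *v x)) = sigma2 * (tp * rp * (norm (Rh *v y))\<^sup>2 + sigma2 * Re (cinner y (Rh *v y)))"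
    by (simp add: cinner_self)
  moreover have "Re (cinner y (Rh *v y)) > 0" using Rh_pos[OF pdRb bb y0] .
  ultimately show ?thesis using s2 tp rp
    by (simp add: add_nonneg_pos mult_pos_pos)
qed

lemma Rt_quad_nonneg: "Re (cinner x (Rt *v x)) \<ge> 0"
  using Rt_quad_pos[of x] by (cases "x = 0") auto

lemma Rt_lower: "\<exists>c>0. \<forall>x. Re (cinner x (Rt *v x)) \<ge> c * (norm x)\<^sup>2"
proof -
  define q where "q x = Re (cinner x (Rt *v x))" for x
  have qc: "continuous_on UNIV q" unfolding q_def by (intro continuous_intros)
  obtain x0 where x0: "x0 \<in> sphere (0::complex^'m) 1" and min: "\<And>y. y \<in> sphere 0 1 \<Longrightarrow> q x0 \<le> q y"
  proof -
    have ne: "sphere (0::complex^'m) 1 \<noteq> {}" by (simp add: sphere_eq_empty)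
    show ?thesis using continuous_attains_inf[OF compact_sphere ne continuous_on_subset[OF qc subset_UNIV]] that
      by blast
  qed
  have "x0 \<noteq> 0" using x0 by auto
  then have c0: "q x0 > 0" using Rt_quad_pos[of x0] by (auto simp: q_def)
  have "q x \<ge> q x0 * (norm x)\<^sup>2" for x
  proof (cases "x = 0")
    case True then show ?thesis by (simp add: q_def)
  next
    case False
    define x1 where "x1 = complex_of_real (1 / norm x) *s x"
    have "x1 \<in> sphere 0 1" using False by (simp add: x1_def norm_cscale norm_divide)
    then have "q x0 \<le> q x1" by (rule min)
    also have "q x1 = q x / (norm x)\<^sup>2"
      by (simp add: q_def x1_def mat_scalar cinner_scale_left cinner_scale_right power2_eq_square)
    finally show ?thesis using False by (simp add: field_simps)
  qed
  then show ?thesis using c0 unfolding q_def by blast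
qed

lemma trace_Rt_nonneg:
  fixes W :: "complex^'k^'m"
  shows "Re (trace (ctrans W ** Rt ** W)) \<ge> 0"
proof -
  have "trace (ctrans W ** Rt ** W) = (\<Sum>j\<in>UNIV. cinner (\<chi> i. W $ i $ j) (Rt *v (\<chi> i. W $ i $ j)))"
    unfolding trace_def
    by (intro sum.cong refl) (simp add: matrix_matrix_mult_def ctrans_def cinner_def matrix_vector_mult_def
        sum_distrib_left sum_distrib_right mult_ac; subst sum.swap; simp add: mult_ac)
  then show ?thesis by (simp add: Re_sum sum_nonneg Rt_quad_nonneg)
qed

end

lemma gauss1:
  assumes a: "a > 0"
  shows "(\<integral>\<^sup>+x. ennreal (exp (- a * x\<^sup>2)) \<partial>lborel) = ennreal (sqrt (pi / a))"
proof -
  define s where "s = sqrt (1 / (2 * a))"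
  have s2: "s\<^sup>2 = 1 / (2 * a)" using a by (simp add: s_def)
  have nd: "exp (- a * x\<^sup>2) = sqrt (pi / a) * normal_density 0 s x" for x
  proof -
    have "2 * pi * s\<^sup>2 = pi / a" using a by (simp add: s2)
    moreover have "- (x - 0)\<^sup>2 / (2 * s\<^sup>2) = - a * x\<^sup>2" using a by (simp add: s2)
    ultimately show ?thesis using a by (simp add: normal_density_def)
  qed
  have "(\<integral>\<^sup>+x. ennreal (exp (- a * x\<^sup>2)) \<partial>lborel)
      = (\<integral>\<^sup>+x. ennreal (sqrt (pi / a)) * ennreal (normal_density 0 s x) \<partial>lborel)"
    unfolding nd by (intro nn_integral_cong ennreal_mult) (use a in \<open>simp_all add: normal_density_nonneg\<close>)
  also have "\<dots> = ennreal (sqrt (pi / a)) * (\<integral>\<^sup>+x. ennreal (normal_density 0 s x) \<partial>lborel)"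
    by (rule nn_integral_cmult) simp
  also have "(\<integral>\<^sup>+x. ennreal (normal_density 0 s x) \<partial>lborel) = ennreal (\<integral>x. normal_density 0 s x \<partial>lborel)"
    using a by (intro nn_integral_eq_integral) (auto simp: s_def normal_density_nonneg)
  also have "(\<integral>x. normal_density 0 s x \<partial>lborel) = 1"
    using a integral_normal_density[of s 0] by (simp add: s_def)
  finally show ?thesis by simp
qed

lemma gaussE:
  assumes a: "a > 0"
  shows "(\<integral>\<^sup>+z. ennreal (exp (- a * (norm (z::'a::euclidean_space))\<^sup>2)) \<partial>lborel)
          = ennreal (sqrt (pi / a) ^ DIM('a))"
proof -
  have e: "ennreal (exp (- a * (norm z)\<^sup>2)) = (\<Prod>b\<in>Basis. ennreal (exp (- a * (z \<bullet> b)\<^sup>2)))" for z :: 'a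
  proof -
    have "(norm z)\<^sup>2 = (\<Sum>b\<in>Basis. (z \<bullet> b)\<^sup>2)"
      by (subst power2_norm_eq_inner, subst euclidean_inner) (simp add: power2_eq_square)
    then have "- a * (norm z)\<^sup>2 = (\<Sum>b\<in>Basis. - a * (z \<bullet> b)\<^sup>2)" by (simp add: sum_distrib_left)
    then have "exp (- a * (norm z)\<^sup>2) = (\<Prod>b\<in>Basis. exp (- a * (z \<bullet> b)\<^sup>2))"
      by (simp add: exp_sum)
    then show ?thesis by (simp add: prod_ennreal)
  qed
  have "(\<integral>\<^sup>+z. ennreal (exp (- a * (norm (z::'a))\<^sup>2)) \<partial>lborel)
      = (\<integral>\<^sup>+z. (\<Prod>b\<in>Basis. (\<lambda>x. ennreal (exp (- a * x\<^sup>2))) ((z::'a) \<bullet> b)) \<partial>lborel)"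
    unfolding e ..
  also have "\<dots> = (\<Prod>b\<in>(Basis::'a set). (\<integral>\<^sup>+x. ennreal (exp (- a * x\<^sup>2)) \<partial>lborel))"
    by (rule nn_integral_lborel_prod) auto
  also have "\<dots> = (\<Prod>b\<in>(Basis::'a set). ennreal (sqrt (pi / a)))" using gauss1[OF a] by simp
  also have "\<dots> = ennreal (sqrt (pi / a) ^ DIM('a))" using a by (simp add: ennreal_power)
  finally show ?thesis .
qed

lemma cgauss_density_meas[measurable]: "cgauss_density s \<in> borel_measurable borel"
  unfolding cgauss_density_def[abs_def] by measurable

lemma cgauss_density_pos: "s > 0 \<Longrightarrow> cgauss_density s z > 0"
  by (simp add: cgauss_density_def)

lemma sets_CN[simp, measurable_cong]: "sets (CN s) = sets borel"
  by (simp add: CN_def)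
lemma space_CN[simp]: "space (CN s) = UNIV"
  by (simp add: CN_def)

lemma CN_prob:
  assumes s: "s > 0"
  shows "prob_space (CN s :: (complex^'n) measure)"
proof
  have "emeasure (CN s :: (complex^'n) measure) (space (CN s))
      = (\<integral>\<^sup>+z. ennreal (cgauss_density s (z::complex^'n)) \<partial>lborel)"
    by (simp add: CN_def emeasure_density)
  also have "\<dots> = (\<integral>\<^sup>+z. ennreal (1 / (pi * s) ^ CARD('n)) * ennreal (exp (- (1 / s) * (norm (z::complex^'n))\<^sup>2)) \<partial>lborel)"
    using s by (intro nn_integral_cong) (simp add: cgauss_density_def ennreal_mult[symmetric])
  also have "\<dots> = ennreal (1 / (pi * s) ^ CARD('n)) * (\<integral>\<^sup>+z. ennreal (exp (- (1 / s) * (norm (z::complex^'n))\<^sup>2)) \<partial>lborel)"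
    by (rule nn_integral_cmult) simp
  also have "(\<integral>\<^sup>+z. ennreal (exp (- (1 / s) * (norm (z::complex^'n))\<^sup>2)) \<partial>lborel)
      = ennreal (sqrt (pi / (1 / s)) ^ DIM(complex^'n))"
    by (rule gaussE) (use s in simp)
  also have "sqrt (pi / (1 / s)) ^ DIM(complex^'n) = sqrt (pi * s) ^ (CARD('n) * 2)"
    by (simp add: DIM_cart)
  also have "sqrt (pi * s) ^ (CARD('n) * 2) = (pi * s) ^ CARD('n)"
    using s by (simp add: power_mult_distrib[symmetric] power_mult[symmetric] mult.commute[of _ 2] power_mult)
  also have "ennreal (1 / (pi * s) ^ CARD('n)) * ennreal ((pi * s) ^ CARD('n)) = 1"
    using s by (simp add: ennreal_mult[symmetric])
  finally show "emeasure (CN s :: (complex^'n) measure) (space (CN s)) = 1" .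
qed

lemma CN_moment:
  assumes s: "s > 0"
  shows "(\<integral>\<^sup>+z. ennreal ((norm z)\<^sup>2) \<partial>(CN s :: (complex^'n) measure)) < \<infinity>"
proof -
  define c where "c = 2 * s / (pi * s) ^ CARD('n)"
  have c0: "c \<ge> 0" using s by (simp add: c_def)
  have "(\<integral>\<^sup>+z. ennreal ((norm z)\<^sup>2) \<partial>(CN s :: (complex^'n) measure))
      = (\<integral>\<^sup>+z. ennreal (cgauss_density s (z::complex^'n)) * ennreal ((norm z)\<^sup>2) \<partial>lborel)"
    unfolding CN_def by (rule nn_integral_density) auto
  also have "\<dots> \<le> (\<integral>\<^sup>+z. ennreal c * ennreal (exp (- (1 / (2 * s)) * (norm (z::complex^'n))\<^sup>2)) \<partial>lborel)"
  proof (intro nn_integral_mono)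
    fix z :: "complex^'n"
    define y where "y = (norm z)\<^sup>2 / (2 * s)"
    have y0: "y \<ge> 0" using s by (simp add: y_def)
    have ye: "y \<le> exp y" using exp_ge_add_one_self[of y] by linarith
    have "exp (- (norm z)\<^sup>2 / s) * (norm z)\<^sup>2 = 2 * s * (exp (- y) * exp (- y) * y)"
      using s by (simp add: y_def exp_add[symmetric])
    also have "\<dots> \<le> 2 * s * (exp (- y) * exp (- y) * exp y)"
      using s ye by (intro mult_left_mono) auto
    also have "\<dots> = 2 * s * exp (- y)" by (simp add: exp_minus field_simps)
    finally have "exp (- (norm z)\<^sup>2 / s) * (norm z)\<^sup>2 \<le> 2 * s * exp (- y)" .
    then have "cgauss_density s z * (norm z)\<^sup>2 \<le> c * exp (- (1 / (2 * s)) * (norm z)\<^sup>2)"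
      using s by (simp add: cgauss_density_def c_def y_def divide_right_mono field_simps)
    then show "ennreal (cgauss_density s z) * ennreal ((norm z)\<^sup>2)
        \<le> ennreal c * ennreal (exp (- (1 / (2 * s)) * (norm z)\<^sup>2))"
      using c0 s by (simp add: ennreal_mult[symmetric] cgauss_density_def)
  qed
  also have "\<dots> = ennreal c * (\<integral>\<^sup>+z. ennreal (exp (- (1 / (2 * s)) * (norm (z::complex^'n))\<^sup>2)) \<partial>lborel)"
    by (rule nn_integral_cmult) simp
  also have "(\<integral>\<^sup>+z. ennreal (exp (- (1 / (2 * s)) * (norm (z::complex^'n))\<^sup>2)) \<partial>lborel)
      = ennreal (sqrt (pi / (1 / (2 * s))) ^ DIM(complex^'n))"
    by (rule gaussE) (use s in simp)
  also have "ennreal c * ennreal (sqrt (pi / (1 / (2 * s))) ^ DIM(complex^'n)) < \<infinity>"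
    by (simp add: ennreal_mult_less_top)
  finally show ?thesis .
qed

lemma lim_theta_pos:
  fixes a b t X2 Y s th :: real
  assumes th: "0 < th" "th < 1" and a: "0 \<le> a" and b: "0 < b" and t: "0 \<le> t" and X2: "0 \<le> X2"
    and Y: "0 < Y" and s: "0 < s"
  shows "((\<lambda>P. max 0 (log 2 (1 + (1 - th) * P * a / ((1 - th) * P * b + th * P * t + s))
                    - log 2 (1 + (1 - th) * P * X2 / (th * P * Y + s))))
         \<longlongrightarrow> max 0 (log 2 (1 + (1 - th) * a / ((1 - th) * b + th * t))
                    - log 2 (1 + (1 - th) * X2 / (th * Y)))) at_top"
proof -
  have sP: "((\<lambda>P::real. s / P) \<longlongrightarrow> 0) at_top"
    by (intro tendsto_divide_0[OF tendsto_const] filterlim_at_top_imp_at_infinity filterlim_ident)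
  have d1: "(1 - th) * b + th * t > 0" using th b t by (simp add: add_pos_nonneg)
  have d2: "th * Y > 0" using th Y by simp
  have l1': "((\<lambda>P. (1 - th) * a / ((1 - th) * b + th * t + s / P)) \<longlongrightarrow> (1 - th) * a / ((1 - th) * b + th * t + 0)) at_top"
    using d1 by (intro tendsto_divide tendsto_add tendsto_const sP) auto
  have l2': "((\<lambda>P. (1 - th) * X2 / (th * Y + s / P)) \<longlongrightarrow> (1 - th) * X2 / (th * Y + 0)) at_top"
    using d2 by (intro tendsto_divide tendsto_add tendsto_const sP) auto
  have l1: "((\<lambda>P. (1 - th) * a / ((1 - th) * b + th * t + s / P)) \<longlongrightarrow> (1 - th) * a / ((1 - th) * b + th * t)) at_top"
    using l1' by simp
  have l2: "((\<lambda>P. (1 - th) * X2 / (th * Y + s / P)) \<longlongrightarrow> (1 - th) * X2 / (th * Y)) at_top"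
    using l2' by simp
  have g1: "(1 - th) * a / ((1 - th) * b + th * t) \<ge> 0" using th a d1 by simp
  have g2: "(1 - th) * X2 / (th * Y) \<ge> 0" using th X2 d2 by simp
  have L: "((\<lambda>P. max 0 (log 2 (1 + (1 - th) * a / ((1 - th) * b + th * t + s / P))
                    - log 2 (1 + (1 - th) * X2 / (th * Y + s / P))))
         \<longlongrightarrow> max 0 (log 2 (1 + (1 - th) * a / ((1 - th) * b + th * t))
                    - log 2 (1 + (1 - th) * X2 / (th * Y)))) at_top"
  proof -
    have L1: "((\<lambda>P. log 2 (1 + (1 - th) * a / ((1 - th) * b + th * t + s / P))) \<longlongrightarrow> log 2 (1 + (1 - th) * a / ((1 - th) * b + th * t))) at_top"
      by (rule tendsto_log[OF tendsto_const tendsto_add[OF tendsto_const l1]]) (use g1 in auto)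
    have L2: "((\<lambda>P. log 2 (1 + (1 - th) * X2 / (th * Y + s / P))) \<longlongrightarrow> log 2 (1 + (1 - th) * X2 / (th * Y))) at_top"
      by (rule tendsto_log[OF tendsto_const tendsto_add[OF tendsto_const l2]]) (use g2 in auto)
    show ?thesis by (rule tendsto_max[OF tendsto_const tendsto_diff[OF L1 L2]])
  qed
  show ?thesis
  proof (rule Lim_transform_eventually[OF L])
    show "\<forall>\<^sub>F P in at_top. max 0 (log 2 (1 + (1 - th) * a / ((1 - th) * b + th * t + s / P))
                    - log 2 (1 + (1 - th) * X2 / (th * Y + s / P))) =
        max 0 (log 2 (1 + (1 - th) * P * a / ((1 - th) * P * b + th * P * t + s))
                    - log 2 (1 + (1 - th) * P * X2 / (th * P * Y + s)))"
    proof (rule eventually_at_top_linorderI[of 1])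
      fix P :: real assume P: "1 \<le> P"
      have e1: "(1 - th) * a / ((1 - th) * b + th * t + s / P) = (1 - th) * P * a / ((1 - th) * P * b + th * P * t + s)"
        using P by (simp add: field_simps)
      have e2: "(1 - th) * X2 / (th * Y + s / P) = (1 - th) * P * X2 / (th * P * Y + s)"
        using P by (simp add: field_simps)
      show "max 0 (log 2 (1 + (1 - th) * a / ((1 - th) * b + th * t + s / P))
                    - log 2 (1 + (1 - th) * X2 / (th * Y + s / P))) =
        max 0 (log 2 (1 + (1 - th) * P * a / ((1 - th) * P * b + th * P * t + s))
                    - log 2 (1 + (1 - th) * P * X2 / (th * P * Y + s)))"
        by (simp only: e1 e2)
    qed
  qed
qed

lemma log2_le: "0 \<le> x \<Longrightarrow> log 2 (1 + x) \<le> x / ln 2"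
  by (simp add: log_def divide_right_mono ln_add_one_self_le_self)

lemma bound_f:
  fixes a b t X2 Y s th P c :: real
  assumes P: "0 < P" and th: "0 \<le> th" "th < 1" and a: "0 \<le> a" and c: "0 < c" "c \<le> b" and t: "0 \<le> t"
    and X2: "0 \<le> X2" and Y: "0 \<le> Y" and s: "0 < s"
  shows "max 0 (log 2 (1 + (1 - th) * P * a / ((1 - th) * P * b + th * P * t + s))
                    - log 2 (1 + (1 - th) * P * X2 / (th * P * Y + s))) \<le> a / (c * ln 2)"
proof -
  define gb where "gb = (1 - th) * P * a / ((1 - th) * P * b + th * P * t + s)"
  define ge where "ge = (1 - th) * P * X2 / (th * P * Y + s)"
  have p1: "(1 - th) * P > 0" using th P by simp
  have den: "(1 - th) * P * b + th * P * t + s \<ge> (1 - th) * P * b"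
    using th P t s by (simp add: add_nonneg_nonneg add_increasing2)
  have bpos: "(1 - th) * P * b > 0" using p1 c by simp
  have gb0: "gb \<ge> 0" unfolding gb_def using p1 a bpos den by simp
  have "gb \<le> (1 - th) * P * a / ((1 - th) * P * b)"
    unfolding gb_def using p1 a bpos den by (intro divide_left_mono) auto
  also have "\<dots> = a / b" using th P by simp
  also have "\<dots> \<le> a / c" using a c by (simp add: divide_left_mono)
  finally have gbc: "gb \<le> a / c" .
  have ge0: "ge \<ge> 0" unfolding ge_def using p1 X2 th P Y s by simp
  have "log 2 (1 + ge) \<ge> 0" using ge0 by simp
  moreover have "log 2 (1 + gb) \<le> gb / ln 2" using log2_le[OF gb0] .
  moreover have "gb / ln 2 \<le> a / (c * ln 2)" using gbc by (simp add: divide_right_mono field_simps)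
  moreover have "a / (c * ln 2) \<ge> 0" using a c by simp
  ultimately show ?thesis unfolding gb_def[symmetric] ge_def[symmetric] by simp
qed

lemma theta0_event:
  fixes a b t X2 Y s th :: real
  assumes th: "th = 0" and a: "0 \<le> a" and b: "0 < b" and X2: "0 < X2" and s: "0 < s"
  shows "\<forall>\<^sub>F P in at_top. max 0 (log 2 (1 + (1 - th) * P * a / ((1 - th) * P * b + th * P * t + s))
                    - log 2 (1 + (1 - th) * P * X2 / (th * P * Y + s))) = 0"
proof (rule eventually_at_top_linorderI[of "s * (a / b) / X2 + 1"])
  fix P assume P: "s * (a / b) / X2 + 1 \<le> P"
  have ab: "a / b \<ge> 0" using a b by simp
  have P0: "P > 0" using P ab s X2 by (smt (verit) divide_nonneg_pos mult_nonneg_nonneg)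
  have gb: "P * a / (P * b + s) \<le> a / b"
  proof -
    have "P * a / (P * b + s) \<le> P * a / (P * b)" using P0 a b s by (intro divide_left_mono) (auto intro!: mult_pos_pos add_pos_pos)
    then show ?thesis using P0 by simp
  qed
  have "s * (a / b) / X2 < P" using P by simp
  then have "s * (a / b) < P * X2" using X2 by (subst (asm) divide_less_eq) auto
  then have ge: "a / b < P * X2 / s" using s by (simp add: field_simps)
  have "log 2 (1 + P * a / (P * b + s)) \<le> log 2 (1 + P * X2 / s)"
    using gb ge P0 a b s X2 by (subst log_le_cancel_iff) (auto intro!: add_pos_nonneg)
  then show "max 0 (log 2 (1 + (1 - th) * P * a / ((1 - th) * P * b + th * P * t + s))
                    - log 2 (1 + (1 - th) * P * X2 / (th * P * Y + s))) = 0"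
    using th by simp
qed

lemma cont_cs[continuous_intros]:
  fixes f :: "'a::topological_space \<Rightarrow> complex^'n"
  shows "continuous_on S f \<Longrightarrow> continuous_on S c \<Longrightarrow> continuous_on S (\<lambda>x. c x *s f x)"
  unfolding vector_scalar_mult_def
  by (intro continuous_on_vec_lambda continuous_intros continuous_on_component)

lemma cont_ctrans[continuous_intros]:
  fixes f :: "'a::topological_space \<Rightarrow> complex^'n^'m"
  shows "continuous_on S f \<Longrightarrow> continuous_on S (\<lambda>x. ctrans (f x))"
  unfolding ctrans_def
  by (intro continuous_on_vec_lambda continuous_intros continuous_on_component)

lemma cont_mm[continuous_intros]:
  fixes f :: "'a::topological_space \<Rightarrow> complex^'n^'m" and g :: "'a \<Rightarrow> complex^'k^'n"
  shows "continuous_on S f \<Longrightarrow> continuous_on S g \<Longrightarrow> continuous_on S (\<lambda>x. f x ** g x)"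
  unfolding matrix_matrix_mult_def
  by (intro continuous_on_vec_lambda continuous_intros continuous_on_component)

lemma cont_mv2[continuous_intros]:
  fixes f :: "'a::topological_space \<Rightarrow> complex^'n^'m" and g :: "'a \<Rightarrow> complex^'n"
  shows "continuous_on S f \<Longrightarrow> continuous_on S g \<Longrightarrow> continuous_on S (\<lambda>x. f x *v g x)"
  unfolding matrix_vector_mult_def
  by (intro continuous_on_vec_lambda continuous_intros continuous_on_component)

lemma cont_trace[continuous_intros]:
  fixes f :: "'a::topological_space \<Rightarrow> complex^'n^'n"
  shows "continuous_on S f \<Longrightarrow> continuous_on S (\<lambda>x. trace (f x))"
  unfolding trace_def
  by (intro continuous_intros continuous_on_component)

lemma meas_cont:
  assumes "continuous_on UNIV H" "f \<in> borel_measurable M"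
  shows "(\<lambda>x. H (f x)) \<in> borel_measurable M"
  using measurable_compose[OF assms(2) borel_measurable_continuous_onI[OF assms(1)]] by simp

lemma meas_cinner[measurable]:
  fixes f g :: "'a \<Rightarrow> complex^'n"
  assumes "f \<in> borel_measurable M" "g \<in> borel_measurable M"
  shows "(\<lambda>x. cinner (f x) (g x)) \<in> borel_measurable M"
proof (rule borel_measurable_continuous_Pair[where H="\<lambda>a b. cinner a b", OF assms])
  show "continuous_on UNIV (\<lambda>x. cinner (fst x) (snd x))"
    by (intro cont_cinner continuous_on_fst continuous_on_snd continuous_on_id)
qed

lemma meas_ctrans_mv[measurable]:
  fixes f :: "'a \<Rightarrow> complex^'k^'n" and g :: "'a \<Rightarrow> complex^'n"
  assumes "f \<in> borel_measurable M" "g \<in> borel_measurable M"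
  shows "(\<lambda>x. ctrans (f x) *v g x) \<in> borel_measurable M"
proof (rule borel_measurable_continuous_Pair[where H="\<lambda>a b. ctrans a *v b", OF assms])
  show "continuous_on UNIV (\<lambda>x. ctrans (fst x) *v (snd x))"
    by (intro cont_mv2 cont_ctrans continuous_on_fst continuous_on_snd continuous_on_id)
qed

lemma meas_cs[measurable]:
  fixes f :: "'a \<Rightarrow> complex^'n" and c :: "'a \<Rightarrow> complex"
  assumes "c \<in> borel_measurable M" "f \<in> borel_measurable M"
  shows "(\<lambda>x. c x *s f x) \<in> borel_measurable M"
proof (rule borel_measurable_continuous_Pair[where H="\<lambda>a b. a *s b", OF assms])
  show "continuous_on UNIV (\<lambda>x. fst x *s (snd x :: complex^'n))"
    by (intro cont_cs continuous_on_fst continuous_on_snd continuous_on_id)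
qed

lemma meas_beam[measurable]:
  fixes f :: "'a \<Rightarrow> complex^'n"
  shows "f \<in> borel_measurable M \<Longrightarrow> (\<lambda>x. beam (f x)) \<in> borel_measurable M"
  unfolding beam_def by measurable

lemma meas_quadRe[measurable]:
  fixes f :: "'a \<Rightarrow> complex^'n" and R :: "complex^'n^'n"
  shows "f \<in> borel_measurable M \<Longrightarrow> (\<lambda>x. Re (cinner (f x) (R *v f x))) \<in> borel_measurable M"
  by (rule meas_cont[where H="\<lambda>v. Re (cinner v (R *v v))"]) (intro continuous_intros)

lemma meas_trq[measurable]:
  fixes f :: "'a \<Rightarrow> complex^'k^'n" and R :: "complex^'n^'n"
  shows "f \<in> borel_measurable M \<Longrightarrow> (\<lambda>x. Re (trace (ctrans (f x) ** R ** f x))) \<in> borel_measurable M"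
  by (rule meas_cont[where H="\<lambda>v. Re (trace (ctrans v ** R ** v))"]) (intro continuous_intros continuous_on_id)

lemma meas_input_fst[measurable]: "fst \<in> borel_measurable (input_space s)"
  unfolding input_space_def by measurable
lemma meas_input_fs[measurable]: "(\<lambda>x. fst (snd x)) \<in> borel_measurable (input_space s)"
  unfolding input_space_def by measurable
lemma meas_input_ss[measurable]: "(\<lambda>x. snd (snd x)) \<in> borel_measurable (input_space s)"
  unfolding input_space_def by measurable

lemma cont_hhat: "continuous_on UNIV (\<lambda>p. h_hat sigma2 tp rp bb Rb (fst p) (snd p))"
  unfolding h_hat_def y_p_def h_b_def
  by (intro continuous_intros continuous_on_fst continuous_on_snd continuous_on_id)

lemma cont_he: "continuous_on UNIV (\<lambda>p. h_e be Reve C rho (fst p) (snd p))"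
  unfolding h_e_def g_e_def
  by (intro continuous_intros continuous_on_fst continuous_on_snd continuous_on_id)

lemma meas_hhat[measurable]:
  "f \<in> borel_measurable M \<Longrightarrow> g \<in> borel_measurable M \<Longrightarrow> (\<lambda>x. h_hat sigma2 tp rp bb Rb (f x) (g x)) \<in> borel_measurable M"
  by (rule borel_measurable_continuous_Pair[OF _ _ cont_hhat])

lemma meas_he[measurable]:
  "f \<in> borel_measurable M \<Longrightarrow> g \<in> borel_measurable M \<Longrightarrow> (\<lambda>x. h_e be Reve C rho (f x) (g x)) \<in> borel_measurable M"
  by (rule borel_measurable_continuous_Pair[OF _ _ cont_he])

lemma meas_gamma_b[measurable]:
  assumes [measurable]: "V \<in> borel_measurable borel" "f \<in> borel_measurable M"
  shows "(\<lambda>x. gamma_b s2 Rt V Ps Pa (f x)) \<in> borel_measurable M"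
  unfolding gamma_b_def by measurable

lemma meas_gamma_e[measurable]:
  assumes [measurable]: "V \<in> borel_measurable borel" "f \<in> borel_measurable M" "g \<in> borel_measurable M"
  shows "(\<lambda>x. gamma_e s2 V Ps Pa (f x) (g x)) \<in> borel_measurable M"
  unfolding gamma_e_def by measurable

lemma meas_gamma_b_inf[measurable]:
  assumes [measurable]: "V \<in> borel_measurable borel" "f \<in> borel_measurable M"
  shows "(\<lambda>x. gamma_b_inf Rt V th (f x)) \<in> borel_measurable M"
  unfolding gamma_b_inf_def by measurable

lemma meas_gamma_e_inf[measurable]:
  assumes [measurable]: "V \<in> borel_measurable borel" "f \<in> borel_measurable M" "g \<in> borel_measurable M"
  shows "(\<lambda>x. gamma_e_inf V th (f x) (g x)) \<in> borel_measurable M"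
  unfolding gamma_e_inf_def by measurable

lemma neg_AE:
  fixes S :: "'a::euclidean_space set"
  assumes "negligible S" "S \<in> sets borel"
  shows "AE x in lborel. x \<notin> S"
proof -
  have "S \<in> null_sets lborel"
    using assms by (simp add: negligible_iff_null_sets null_sets_completion_iff)
  then show ?thesis by (rule AE_not_in)
qed

lemma AE_CN:
  assumes "AE x in lborel. P x"
  shows "AE x in CN s. P x"
  unfolding CN_def using assms by (subst AE_density) (auto elim: AE_mp)

lemma CN_open_pos:
  fixes A :: "(complex^'n) set"
  assumes s: "s > 0" and A: "open A" "c \<in> A"
  shows "\<not> (AE x in CN s. x \<notin> A)"
proof
  assume ae: "AE x in CN s. x \<notin> A"
  obtain r where r: "r > 0" "ball c r \<subseteq> A" using A open_contains_ball by blast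
  have "AE x in lborel. 0 < ennreal (cgauss_density s x) \<longrightarrow> x \<notin> A"
    using ae unfolding CN_def by (subst (asm) AE_density) auto
  then have "AE x in lborel. x \<notin> ball c r"
  proof (rule AE_mp, intro AE_I2 impI)
    fix x assume "0 < ennreal (cgauss_density s x) \<longrightarrow> x \<notin> A"
    then show "x \<notin> ball c r" using s r cgauss_density_pos[OF s, of x] by auto
  qed
  then have "emeasure lborel (ball c r) = 0"
    by (subst (asm) AE_iff_measurable[of "ball c r"]) auto
  then have "Henstock_Kurzweil_Integration.content (ball c r) = 0" by (simp add: measure_def)
  then show False using content_ball_pos[OF r(1), of c] by simp
qed

lemma mv_bounded:
  fixes A :: "complex^'n^'m"
  shows "\<exists>B>0. \<forall>x. norm (A *v x) \<le> B * norm x"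
proof -
  have "linear ((*v) A)"
  proof (rule linearI)
    show "A *v (x + y) = A *v x + A *v y" for x y by (simp add: matrix_vector_right_distrib)
    show "A *v (r *\<^sub>R x) = r *\<^sub>R (A *v x)" for r x
      by (simp add: vec_eq_iff matrix_vector_mult_def scaleR_sum_right)
  qed
  then have "bounded_linear ((*v) A)" by (simp add: linear_conv_bounded_linear)
  then obtain K where "K > 0" "\<forall>x. norm (A *v x) \<le> norm x * K"
    using bounded_linear.pos_bounded by blast
  then show ?thesis by (metis mult.commute)
qed

lemma sq_sum_le: "(a + b)\<^sup>2 \<le> 2 * a\<^sup>2 + 2 * (b::real)\<^sup>2"
  by (smt (verit) sum_squares_bound power2_sum)

locale sys = chan Rb sigma2 tp rp bb for Rb :: "complex^'m^'m" and sigma2 tp rp bb +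
  fixes Reve C :: "complex^'m^'m" and V :: "complex^'m \<Rightarrow> complex^'k^'m" and rho be :: real
  assumes card: "CARD('k) + 1 = CARD('m)" and pdRe: "pos_def Reve" and rho0: "0 \<le> rho"
    and rho1: "rho < 1" and be: "be > 0"
    and Vmeas[measurable]: "V \<in> borel_measurable borel"
    and Vorth: "\<forall>h. h \<noteq> 0 \<longrightarrow> ctrans (V h) ** V h = mat 1 \<and> ctrans (V h) *v h = 0"
begin

abbreviation M1 :: "(complex^'m) measure" where "M1 \<equiv> CN 1"
abbreviation M3 :: "(complex^'m) measure" where "M3 \<equiv> CN sigma2"
abbreviation NN :: "((complex^'m) \<times> (complex^'m)) measure" where "NN \<equiv> M1 \<Otimes>\<^sub>M M3"
abbreviation MM :: "((complex^'m) \<times> (complex^'m) \<times> (complex^'m)) measure" where "MM \<equiv> input_space sigma2"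

lemma MM_eq: "MM = M1 \<Otimes>\<^sub>M NN" by (simp add: input_space_def)

lemma M1_prob: "prob_space M1" by (rule CN_prob) simp
lemma M3_prob: "prob_space M3" by (rule CN_prob) (rule s2)
lemma NN_prob: "prob_space NN" by (intro prob_space_pair M1_prob M3_prob)
lemma MM_prob: "prob_space MM" unfolding MM_eq by (intro prob_space_pair M1_prob NN_prob)

lemma sf1: "sigma_finite_measure M1" by (rule prob_space_imp_sigma_finite[OF M1_prob])
lemma sf3: "sigma_finite_measure M3" by (rule prob_space_imp_sigma_finite[OF M3_prob])
lemma sfN: "sigma_finite_measure NN" by (rule prob_space_imp_sigma_finite[OF NN_prob])
lemma psf13: "pair_sigma_finite M1 M3" by (simp add: pair_sigma_finite_def sf1 sf3)
lemma psf1N: "pair_sigma_finite M1 NN" by (simp add: pair_sigma_finite_def sf1 sfN)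

definition hh :: "(complex^'m) \<times> (complex^'m) \<times> (complex^'m) \<Rightarrow> complex^'m" where
  "hh \<omega> = h_hat sigma2 tp rp bb Rb (fst \<omega>) (snd (snd \<omega>))"
definition he :: "(complex^'m) \<times> (complex^'m) \<times> (complex^'m) \<Rightarrow> complex^'m" where
  "he \<omega> = h_e be Reve C rho (fst \<omega>) (fst (snd \<omega>))"

lemma hh_meas[measurable]: "hh \<in> borel_measurable MM"
  unfolding hh_def[abs_def] by measurable
lemma he_meas[measurable]: "he \<in> borel_measurable MM"
  unfolding he_def[abs_def] by measurable

lemma int_fst: "(\<integral>\<^sup>+\<omega>. ennreal ((norm (fst \<omega>))\<^sup>2) \<partial>MM) < \<infinity>"
proof -
  have "(\<integral>\<^sup>+\<omega>. ennreal ((norm (fst \<omega>))\<^sup>2) \<partial>(M1 \<Otimes>\<^sub>M NN)) = (\<integral>\<^sup>+x. \<integral>\<^sup>+y. ennreal ((norm (fst (x, y)))\<^sup>2) \<partial>NN \<partial>M1)"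
    by (rule sigma_finite_measure.nn_integral_fst[symmetric, OF sfN]) measurable
  also have "\<dots> = (\<integral>\<^sup>+x. ennreal ((norm x)\<^sup>2) \<partial>M1)"
    using prob_space.emeasure_space_1[OF NN_prob] by simp
  also have "\<dots> < \<infinity>" by (rule CN_moment) simp
  finally show ?thesis unfolding MM_eq .
qed

lemma int_ss: "(\<integral>\<^sup>+\<omega>. ennreal ((norm (snd (snd \<omega>)))\<^sup>2) \<partial>MM) < \<infinity>"
proof -
  define K where "K = (\<integral>\<^sup>+n. ennreal ((norm n)\<^sup>2) \<partial>M3)"
  have K: "K < \<infinity>" unfolding K_def by (rule CN_moment) (rule s2)
  have inner: "(\<integral>\<^sup>+y. ennreal ((norm (snd y))\<^sup>2) \<partial>NN) = K"
  proof -
    have "(\<integral>\<^sup>+y. ennreal ((norm (snd y))\<^sup>2) \<partial>NN) = (\<integral>\<^sup>+x. \<integral>\<^sup>+y. ennreal ((norm (snd (x, y)))\<^sup>2) \<partial>M3 \<partial>M1)"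
      by (rule sigma_finite_measure.nn_integral_fst[symmetric, OF sf3]) measurable
    also have "\<dots> = K"
      using prob_space.emeasure_space_1[OF M1_prob] by (simp add: K_def)
    finally show ?thesis .
  qed
  have "(\<integral>\<^sup>+\<omega>. ennreal ((norm (snd (snd \<omega>)))\<^sup>2) \<partial>(M1 \<Otimes>\<^sub>M NN))
      = (\<integral>\<^sup>+x. \<integral>\<^sup>+y. ennreal ((norm (snd (snd (x, y))))\<^sup>2) \<partial>NN \<partial>M1)"
    by (rule sigma_finite_measure.nn_integral_fst[symmetric, OF sfN]) measurable
  also have "\<dots> = K"
    using prob_space.emeasure_space_1[OF M1_prob] by (simp add: inner)
  finally show ?thesis unfolding MM_eq using K by simp
qed

end

context sys begin

lemma Rh_inj: "Rh *v x = 0 \<Longrightarrow> x = 0"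
  using Rh_pos[OF pdRb bb, of x] by auto

lemma hhat_zero_iff:
  "h_hat sigma2 tp rp bb Rb g n = 0 \<longleftrightarrow> n = - (complex_of_real (sqrt (tp * rp)) *s h_b bb Rb g)"
proof -
  have c0: "complex_of_real (sqrt (tp * rp)) \<noteq> 0" using tp rp by simp
  have "h_hat sigma2 tp rp bb Rb g n = complex_of_real (sqrt (tp * rp)) *s (Rh *v (Ki *v y_p tp rp bb Rb g n))"
    by (simp add: h_hat_def matrix_vector_mul_assoc)
  moreover have "y_p tp rp bb Rb g n = 0" if "complex_of_real (sqrt (tp * rp)) *s (Rh *v (Ki *v y_p tp rp bb Rb g n)) = 0"
  proof -
    have "Rh *v (Ki *v y_p tp rp bb Rb g n) = 0" using that c0 by (simp add: vector_mul_eq_0)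
    then have "Ki *v y_p tp rp bb Rb g n = 0" by (rule Rh_inj)
    then show ?thesis by (rule Ki_inj)
  qed
  ultimately have "h_hat sigma2 tp rp bb Rb g n = 0 \<longleftrightarrow> y_p tp rp bb Rb g n = 0"
    by (metis matrix_vector_mult_0_right vector_smult_rzero)
  also have "\<dots> \<longleftrightarrow> n = - (complex_of_real (sqrt (tp * rp)) *s h_b bb Rb g)"
    by (auto simp: y_p_def add_eq_0_iff)
  finally show ?thesis .
qed

lemma hh_bound: "\<exists>B>0. \<forall>\<omega>. (norm (hh \<omega>))\<^sup>2 \<le> B * ((norm (fst \<omega>))\<^sup>2 + (norm (snd (snd \<omega>)))\<^sup>2)"
proof -
  obtain B1 where B1: "B1 > 0" "\<forall>x. norm ((Rh ** Ki) *v x) \<le> B1 * norm x" using mv_bounded by blast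
  obtain B2 where B2: "B2 > 0" "\<forall>x. norm (msqrt Rb *v x) \<le> B2 * norm x" using mv_bounded by blast
  define c where "c = sqrt (tp * rp)"
  have c0: "c \<ge> 0" using tp rp by (simp add: c_def)
  define K1 where "K1 = c * B1 * (c * sqrt bb * B2)"
  define K2 where "K2 = c * B1"
  have K1: "K1 \<ge> 0" and K2: "K2 \<ge> 0" using B1 B2 c0 bb by (auto simp: K1_def K2_def intro!: mult_nonneg_nonneg)
  have nb: "norm (hh \<omega>) \<le> K1 * norm (fst \<omega>) + K2 * norm (snd (snd \<omega>))" for \<omega>
  proof -
    define g where "g = fst \<omega>"
    define n where "n = snd (snd \<omega>)"
    have "norm (hh \<omega>) = c * norm ((Rh ** Ki) *v (complex_of_real c *s (complex_of_real (sqrt bb) *s (msqrt Rb *v g)) + n))"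
      using tp rp by (simp add: hh_def h_hat_def y_p_def h_b_def norm_cscale c_def g_def n_def)
    also have "\<dots> \<le> c * (B1 * norm (complex_of_real c *s (complex_of_real (sqrt bb) *s (msqrt Rb *v g)) + n))"
      using B1 c0 by (intro mult_left_mono) auto
    also have "\<dots> \<le> c * (B1 * (c * sqrt bb * (B2 * norm g) + norm n))"
    proof -
      have "norm (complex_of_real c *s (complex_of_real (sqrt bb) *s (msqrt Rb *v g)) + n)
          \<le> norm (complex_of_real c *s (complex_of_real (sqrt bb) *s (msqrt Rb *v g))) + norm n"
        by (rule norm_triangle_ineq)
      also have "norm (complex_of_real c *s (complex_of_real (sqrt bb) *s (msqrt Rb *v g)))
          = c * sqrt bb * norm (msqrt Rb *v g)" using c0 bb by (simp add: norm_cscale norm_mult)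
      also have "\<dots> \<le> c * sqrt bb * (B2 * norm g)" using B2 c0 bb by (intro mult_left_mono) auto
      finally show ?thesis using B1 c0 by (intro mult_left_mono) auto
    qed
    also have "\<dots> = K1 * norm g + K2 * norm n" by (simp add: K1_def K2_def algebra_simps)
    finally show ?thesis by (simp add: g_def n_def)
  qed
  define B where "B = 2 * K1\<^sup>2 + 2 * K2\<^sup>2 + 1"
  have "(norm (hh \<omega>))\<^sup>2 \<le> B * ((norm (fst \<omega>))\<^sup>2 + (norm (snd (snd \<omega>)))\<^sup>2)" for \<omega>
  proof -
    have "(norm (hh \<omega>))\<^sup>2 \<le> (K1 * norm (fst \<omega>) + K2 * norm (snd (snd \<omega>)))\<^sup>2"
      using nb[of \<omega>] by (intro power_mono) auto
    also have "\<dots> \<le> 2 * (K1 * norm (fst \<omega>))\<^sup>2 + 2 * (K2 * norm (snd (snd \<omega>)))\<^sup>2" by (rule sq_sum_le)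
    also have "\<dots> \<le> B * ((norm (fst \<omega>))\<^sup>2 + (norm (snd (snd \<omega>)))\<^sup>2)"
      by (simp add: B_def power_mult_distrib algebra_simps)
    finally show ?thesis .
  qed
  moreover have "B > 0" by (simp add: B_def add_nonneg_pos)
  ultimately show ?thesis by blast
qed

lemma hh_int: "integrable MM (\<lambda>\<omega>. (norm (hh \<omega>))\<^sup>2)"
proof (rule integrableI_bounded)
  show "(\<lambda>\<omega>. (norm (hh \<omega>))\<^sup>2) \<in> borel_measurable MM" by measurable
  obtain B where B: "B > 0" "\<forall>\<omega>. (norm (hh \<omega>))\<^sup>2 \<le> B * ((norm (fst \<omega>))\<^sup>2 + (norm (snd (snd \<omega>)))\<^sup>2)"
    using hh_bound by blast
  have "(\<integral>\<^sup>+\<omega>. ennreal (norm ((norm (hh \<omega>))\<^sup>2)) \<partial>MM)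
      \<le> (\<integral>\<^sup>+\<omega>. ennreal B * (ennreal ((norm (fst \<omega>))\<^sup>2) + ennreal ((norm (snd (snd \<omega>)))\<^sup>2)) \<partial>MM)"
  proof (intro nn_integral_mono)
    fix \<omega>
    have "(norm (hh \<omega>))\<^sup>2 \<le> B * ((norm (fst \<omega>))\<^sup>2 + (norm (snd (snd \<omega>)))\<^sup>2)" using B(2) by blast
    then show "ennreal (norm ((norm (hh \<omega>))\<^sup>2)) \<le> ennreal B * (ennreal ((norm (fst \<omega>))\<^sup>2) + ennreal ((norm (snd (snd \<omega>)))\<^sup>2))"
      using B(1) by (simp add: ennreal_mult[symmetric] ennreal_plus[symmetric] del: ennreal_plus)
  qed
  also have "\<dots> = ennreal B * ((\<integral>\<^sup>+\<omega>. ennreal ((norm (fst \<omega>))\<^sup>2) \<partial>MM) + (\<integral>\<^sup>+\<omega>. ennreal ((norm (snd (snd \<omega>)))\<^sup>2) \<partial>MM))"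
    by (subst nn_integral_cmult) (auto simp: nn_integral_add)
  also have "\<dots> < \<infinity>" using int_fst int_ss by (simp add: ennreal_mult_less_top)
  finally show "(\<integral>\<^sup>+\<omega>. ennreal (norm ((norm (hh \<omega>))\<^sup>2)) \<partial>MM) < \<infinity>" .
qed

definition cR where "cR = (SOME c. c > 0 \<and> (\<forall>x. Re (cinner x (Rt *v x)) \<ge> c * (norm x)\<^sup>2))"

lemma cR: "cR > 0" "Re (cinner x (Rt *v x)) \<ge> cR * (norm x)\<^sup>2"
  using someI_ex[OF Rt_lower] unfolding cR_def[symmetric] by auto

definition bq where "bq h = Re (cinner (beam h) (Rt *v beam h))"
definition tq where "tq h = Re (trace (ctrans (V h) ** Rt ** V h))"

lemma norm_beam: "h \<noteq> 0 \<Longrightarrow> norm (beam h) = 1"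
  by (simp add: beam_def norm_cscale norm_divide)

lemma bq_ge: "h \<noteq> 0 \<Longrightarrow> bq h \<ge> cR"
  using cR(2)[of "beam h"] by (simp add: bq_def norm_beam)

lemma tq_ge: "tq h \<ge> 0" unfolding tq_def by (rule trace_Rt_nonneg)

definition fP where "fP th P \<omega> = max 0 (log 2 (1 + gamma_b sigma2 Rt V ((1 - th) * P) (th * P) (hh \<omega>))
     - log 2 (1 + gamma_e sigma2 V ((1 - th) * P) (th * P) (hh \<omega>) (he \<omega>)))"
definition fI where "fI th \<omega> = max 0 (log 2 (1 + gamma_b_inf Rt V th (hh \<omega>))
     - log 2 (1 + gamma_e_inf V th (hh \<omega>) (he \<omega>)))"

lemma fP_meas[measurable]: "fP th P \<in> borel_measurable MM"
  unfolding fP_def[abs_def] by measurable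
lemma fI_meas[measurable]: "fI th \<in> borel_measurable MM"
  unfolding fI_def[abs_def] by measurable

definition X2 where "X2 \<omega> = (cmod (cinner (he \<omega>) (beam (hh \<omega>))))\<^sup>2"
definition Yq where "Yq \<omega> = (norm (ctrans (V (hh \<omega>)) *v he \<omega>))\<^sup>2"

lemma fP_eq: "fP th P \<omega> = max 0 (log 2 (1 + (1 - th) * P * (norm (hh \<omega>))\<^sup>2 / ((1 - th) * P * bq (hh \<omega>) + th * P * tq (hh \<omega>) + sigma2))
                    - log 2 (1 + (1 - th) * P * X2 \<omega> / (th * P * Yq \<omega> + sigma2)))"
  by (simp add: fP_def gamma_b_def gamma_e_def bq_def tq_def X2_def Yq_def)

lemma fI_eq: "fI th \<omega> = max 0 (log 2 (1 + (1 - th) * (norm (hh \<omega>))\<^sup>2 / ((1 - th) * bq (hh \<omega>) + th * tq (hh \<omega>)))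
                    - log 2 (1 + (1 - th) * X2 \<omega> / (th * Yq \<omega>)))"
  by (simp add: fI_def gamma_b_inf_def gamma_e_inf_def bq_def tq_def X2_def Yq_def)

lemma fP_bound:
  assumes P: "P > 0" and th: "0 \<le> th" "th < 1"
  shows "norm (fP th P \<omega>) \<le> (norm (hh \<omega>))\<^sup>2 / (cR * ln 2)"
proof (cases "hh \<omega> = 0")
  case True
  have "(1 - th) * P * X2 \<omega> / (th * P * Yq \<omega> + sigma2) \<ge> 0"
    using th P s2 by (intro divide_nonneg_nonneg mult_nonneg_nonneg add_nonneg_pos) (auto simp: X2_def Yq_def)
  then have "fP th P \<omega> = 0" unfolding fP_eq True by simp
  then show ?thesis using True by simp
next
  case False
  have "fP th P \<omega> \<le> (norm (hh \<omega>))\<^sup>2 / (cR * ln 2)"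
    unfolding fP_eq
    by (rule bound_f[OF P th _ cR(1) bq_ge[OF False] tq_ge _ _ s2]) (auto simp: X2_def Yq_def)
  moreover have "fP th P \<omega> \<ge> 0" by (simp add: fP_def)
  ultimately show ?thesis by simp
qed

end

lemma ctrans_mv_comp: "(ctrans W *v x) $ k = cinner (column k W) x"
  by (simp add: ctrans_def matrix_vector_mult_def cinner_def column_def)

lemma column_self: "cinner (column k W) (column k W) = (ctrans W ** W) $ k $ k"
  by (simp add: ctrans_def matrix_matrix_mult_def cinner_def column_def)

context sys begin

abbreviation "SR \<equiv> msqrt Reve"

lemma SR_herm: "ctrans SR = SR"
  using msqrt_props(1)[OF pdRe] by (simp add: pos_semidef_def hermitian_def)

lemma SR_inj: "SR *v x = 0 \<Longrightarrow> x = 0" by (rule msqrt_inj[OF pdRe])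

lemma he_expand: "h_e be Reve C rho g u =
   complex_of_real (sqrt be) *s (SR *v (complex_of_real rho *s (C *v g))) +
   (complex_of_real (sqrt be) * complex_of_real (sqrt (1 - rho\<^sup>2))) *s (SR *v u)"
  by (simp add: h_e_def g_e_def matrix_vector_right_distrib mat_scalar vector_add_ldistrib vector_smult_assoc)

lemma he_hyper_AE:
  assumes z: "z \<noteq> 0"
  shows "AE u in lborel. cinner z (h_e be Reve C rho g u) \<noteq> 0"
proof -
  define a where "a = SR *v z"
  have a0: "a \<noteq> 0" using SR_inj z by (auto simp: a_def)
  define alpha where "alpha = cinner z (complex_of_real (sqrt be) *s (SR *v (complex_of_real rho *s (C *v g))))"
  define k where "k = sqrt be * sqrt (1 - rho\<^sup>2)"
  have k0: "k > 0" using be rho0 rho1 by (simp add: k_def power2_less_1_iff abs_of_nonneg)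
  define beta where "beta = - Re alpha / k"
  have sub: "{u. cinner z (h_e be Reve C rho g u) = 0} \<subseteq> {u. a \<bullet> u = beta}"
  proof
    fix u assume "u \<in> {u. cinner z (h_e be Reve C rho g u) = 0}"
    then have "cinner z (h_e be Reve C rho g u) = 0" by simp
    moreover have "cinner z (h_e be Reve C rho g u) = alpha + complex_of_real k * cinner a u"
      unfolding he_expand alpha_def a_def k_def
      by (simp add: cinner_add_right cinner_scale_right cinner_mat SR_herm)
    ultimately have "alpha + complex_of_real k * cinner a u = 0" by simp
    then have "Re (alpha + complex_of_real k * cinner a u) = 0" by simp
    then have "Re alpha + k * (a \<bullet> u) = 0" by (simp add: Re_cinner[symmetric])
    then show "u \<in> {u. a \<bullet> u = beta}" using k0 by (simp add: beta_def field_simps)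
  qed
  have "AE u in lborel. u \<notin> {u. a \<bullet> u = beta}"
    by (rule neg_AE) (use a0 negligible_hyperplane[of a beta] in \<open>auto intro: borel_closed closed_hyperplane\<close>)
  then show ?thesis using sub by (auto elim!: AE_mp)
qed

lemma hhat_AE: "AE n in lborel. h_hat sigma2 tp rp bb Rb g n \<noteq> 0"
proof -
  have "AE n in lborel. n \<notin> {- (complex_of_real (sqrt (tp * rp)) *s h_b bb Rb g)}"
    by (rule neg_AE) (auto intro: negligible_sing)
  then show ?thesis by (auto simp: hhat_zero_iff elim!: AE_mp)
qed

definition Good where
  "Good \<omega> \<longleftrightarrow> hh \<omega> \<noteq> 0 \<and> cinner (he \<omega>) (beam (hh \<omega>)) \<noteq> 0 \<and> ctrans (V (hh \<omega>)) *v he \<omega> \<noteq> 0"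

lemma Good_pred[measurable]: "Measurable.pred MM Good"
  unfolding Good_def[abs_def] by measurable

lemma Pair_meas: "(\<lambda>x. (g, x)) \<in> measurable NN MM"
  unfolding MM_eq by measurable

lemma beam_zero: "h \<noteq> 0 \<Longrightarrow> beam h \<noteq> 0"
  using norm_beam by force

lemma inner_good:
  assumes h: "h_hat sigma2 tp rp bb Rb g n \<noteq> 0"
  shows "AE u in M1. Good (g, (u, n))"
proof -
  define h where "h = h_hat sigma2 tp rp bb Rb g n"
  have h0: "h \<noteq> 0" using h by (simp add: h_def)
  obtain k0 :: 'k where True by simp
  have col: "column k0 (V h) \<noteq> 0"
  proof
    assume "column k0 (V h) = 0"
    then have "cinner (column k0 (V h)) (column k0 (V h)) = 0" by simp
    then show False using Vorth h0 by (simp add: column_self mat_def)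
  qed
  have "AE u in lborel. cinner (beam h) (h_e be Reve C rho g u) \<noteq> 0 \<and> cinner (column k0 (V h)) (h_e be Reve C rho g u) \<noteq> 0"
    using he_hyper_AE[OF beam_zero[OF h0], of g] he_hyper_AE[OF col, of g] by eventually_elim auto
  then have "AE u in M1. cinner (beam h) (h_e be Reve C rho g u) \<noteq> 0 \<and> cinner (column k0 (V h)) (h_e be Reve C rho g u) \<noteq> 0"
    by (rule AE_CN)
  then show ?thesis
  proof eventually_elim
    fix u assume u: "cinner (beam h) (h_e be Reve C rho g u) \<noteq> 0 \<and> cinner (column k0 (V h)) (h_e be Reve C rho g u) \<noteq> 0"
    have "cinner (h_e be Reve C rho g u) (beam h) \<noteq> 0"
      using u cinner_commute[of "h_e be Reve C rho g u" "beam h"] by auto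
    moreover have "ctrans (V h) *v h_e be Reve C rho g u \<noteq> 0"
      using u ctrans_mv_comp[of "V h" "h_e be Reve C rho g u" k0] by auto
    ultimately show "Good (g, (u, n))" using h0 by (simp add: Good_def hh_def he_def h_def)
  qed
qed

lemma good_AE: "AE \<omega> in MM. Good \<omega>"
proof -
  have inner: "AE p in NN. Good (g, p)" for g
  proof -
    have pr: "Measurable.pred NN (\<lambda>p. Good (g, p))"
      using measurable_compose[OF Pair_meas Good_pred] by simp
    have "AE n in M3. AE u in M1. Good (g, (u, n))"
    proof -
      have "AE n in M3. h_hat sigma2 tp rp bb Rb g n \<noteq> 0" by (rule AE_CN[OF hhat_AE])
      then show ?thesis by eventually_elim (rule inner_good)
    qed
    then have "AE u in M1. AE n in M3. Good (g, (u, n))"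
      by (subst pair_sigma_finite.AE_commute[OF psf13]) (use pr in \<open>simp add: pred_def\<close>)
    then show ?thesis
      by (intro pair_sigma_finite.AE_pair_measure[OF psf13]) (use pr in \<open>simp_all add: pred_def\<close>)
  qed
  show ?thesis unfolding MM_eq
    by (intro pair_sigma_finite.AE_pair_measure[OF psf1N])
       (use Good_pred inner in \<open>simp_all add: pred_def MM_eq\<close>)
qed

end

context sys begin

lemma cont_he_u: "continuous_on UNIV (\<lambda>u. h_e be Reve C rho g u)"
  unfolding h_e_def g_e_def by (intro continuous_intros continuous_on_id)

lemma gbi_pos:
  assumes h: "h \<noteq> 0" and th: "0 < th" "th < 1"
  shows "gamma_b_inf Rt V th h > 0"
proof -
  have "(1 - th) * bq h + th * tq h > 0"
    using bq_ge[OF h] cR(1) tq_ge[of h] th by (intro add_pos_nonneg) auto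
  moreover have "(1 - th) * (norm h)\<^sup>2 > 0" using h th by simp
  ultimately show ?thesis by (simp add: gamma_b_inf_def bq_def tq_def)
qed

lemma pos_inner:
  assumes th: "0 < th" "th < 1" and h: "h_hat sigma2 tp rp bb Rb g n \<noteq> 0"
  shows "\<not> (AE u in M1. fI th (g, (u, n)) \<le> 0)"
proof
  assume ae: "AE u in M1. fI th (g, (u, n)) \<le> 0"
  define h where "h = h_hat sigma2 tp rp bb Rb g n"
  have h0: "h \<noteq> 0" using h by (simp add: h_def)
  define Lb where "Lb = log 2 (1 + gamma_b_inf Rt V th h)"
  have Lb: "Lb > 0" using gbi_pos[OF h0 th] by (simp add: Lb_def)
  define w where "w = beam h"
  define Vh where "Vh = V h"
  define hu where "hu u = h_e be Reve C rho g u" for u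
  define Xu where "Xu u = cinner (hu u) w" for u
  define Yu where "Yu u = (norm (ctrans Vh *v hu u))\<^sup>2" for u
  define G where "G u = max 0 (Lb - log 2 (1 + (1 - th) * (cmod (Xu u))\<^sup>2 / (th * Yu u)))" for u
  have G: "fI th (g, (u, n)) = G u" for u
    by (simp add: fI_def gamma_e_inf_def hh_def he_def G_def Lb_def Xu_def Yu_def hu_def w_def Vh_def h_def)
  obtain k0 :: 'k where True by simp
  define e0 :: "complex^'k" where "e0 = axis k0 1"
  obtain v0 where v0: "SR *v v0 = complex_of_real (1 / sqrt be) *s (Vh *v e0)"
    using inj_imp_surj[OF SR_inj] by blast
  define c2 where "c2 = sqrt (1 - rho\<^sup>2)"
  have c2: "c2 > 0" using rho0 rho1 by (simp add: c2_def power2_less_1_iff abs_of_nonneg)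
  define u0 where "u0 = complex_of_real (1 / c2) *s (v0 - complex_of_real rho *s (C *v g))"
  have hu0: "hu u0 = Vh *v e0"
  proof -
    have "complex_of_real rho *s (C *v g) + complex_of_real c2 *s u0 = v0"
      using c2 by (simp add: u0_def vector_smult_assoc)
    then have "hu u0 = complex_of_real (sqrt be) *s (SR *v v0)"
      by (simp add: hu_def h_e_def g_e_def c2_def)
    also have "\<dots> = Vh *v e0" using be by (simp add: v0 vector_smult_assoc)
    finally show ?thesis .
  qed
  have VhT: "ctrans Vh ** Vh = mat 1" "ctrans Vh *v h = 0" using Vorth h0 by (auto simp: Vh_def)
  have X0: "Xu u0 = 0"
  proof -
    have "Xu u0 = cinner e0 (ctrans Vh *v w)" by (simp add: Xu_def hu0 cinner_mat')
    also have "ctrans Vh *v w = 0" by (simp add: w_def beam_def mat_scalar VhT)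
    finally show ?thesis by simp
  qed
  have Y0: "Yu u0 = 1"
    by (simp add: Yu_def hu0 matrix_vector_mul_assoc VhT e0_def)
  have Gu0: "G u0 = Lb" using Lb by (simp add: G_def X0 Y0)
  have cX: "continuous_on UNIV Xu" unfolding Xu_def hu_def
    by (intro continuous_intros cont_he_u)
  have cY: "continuous_on UNIV Yu" unfolding Yu_def hu_def
    by (intro continuous_intros cont_he_u)
  have LX: "(Xu \<longlongrightarrow> Xu u0) (at u0)"
    using cX by (simp add: continuous_on_eq_continuous_at continuous_at)
  have LY: "(Yu \<longlongrightarrow> Yu u0) (at u0)"
    using cY by (simp add: continuous_on_eq_continuous_at continuous_at)
  have LG: "(G \<longlongrightarrow> G u0) (at u0)"
  proof -
    have "((\<lambda>u. (1 - th) * (cmod (Xu u))\<^sup>2 / (th * Yu u)) \<longlongrightarrow> (1 - th) * (cmod (Xu u0))\<^sup>2 / (th * Yu u0)) (at u0)"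
      using th Y0 by (intro tendsto_intros LX LY) auto
    then have "((\<lambda>u. log 2 (1 + (1 - th) * (cmod (Xu u))\<^sup>2 / (th * Yu u))) \<longlongrightarrow> log 2 (1 + (1 - th) * (cmod (Xu u0))\<^sup>2 / (th * Yu u0))) (at u0)"
      using X0 by (intro tendsto_log tendsto_add tendsto_const) auto
    then show ?thesis unfolding G_def by (intro tendsto_max tendsto_diff tendsto_const)
  qed
  have "\<forall>\<^sub>F u in at u0. G u > Lb / 2"
    using order_tendstoD(1)[OF LG, of "Lb / 2"] Gu0 Lb by simp
  then obtain d where d: "d > 0" "\<And>u. u \<noteq> u0 \<Longrightarrow> dist u u0 < d \<Longrightarrow> G u > Lb / 2"
    by (auto simp: eventually_at)
  have pos: "G u > 0" if "u \<in> ball u0 d" for u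
  proof (cases "u = u0")
    case True then show ?thesis using Gu0 Lb by simp
  next
    case False then show ?thesis using d that Lb by (smt (verit) dist_commute mem_ball half_gt_zero)
  qed
  have "AE u in M1. u \<notin> ball u0 d"
    using ae by eventually_elim (use pos G in force)
  then show False using CN_open_pos[of 1 "ball u0 d" u0] d by simp
qed

lemma fI_pos:
  assumes th: "0 < th" "th < 1"
  shows "(\<integral>\<^sup>+\<omega>. ennreal (fI th \<omega>) \<partial>MM) > 0"
proof (rule ccontr)
  assume "\<not> ?thesis"
  then have "(\<integral>\<^sup>+\<omega>. ennreal (fI th \<omega>) \<partial>MM) = 0" by simp
  then have "AE \<omega> in MM. ennreal (fI th \<omega>) = 0" by (subst (asm) nn_integral_0_iff_AE) auto
  then have "AE \<omega> in M1 \<Otimes>\<^sub>M NN. fI th \<omega> \<le> 0" unfolding MM_eq by eventually_elim (simp add: ennreal_eq_0_iff)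
  then have "AE g in M1. AE p in NN. fI th (g, p) \<le> 0"
    by (rule pair_sigma_finite.AE_pair[OF psf1N])
  then obtain g where g: "AE p in NN. fI th (g, p) \<le> 0"
  proof -
    assume r: "\<And>g. AE p in NN. fI th (g, p) \<le> 0 \<Longrightarrow> thesis"
    assume a: "AE g in M1. AE p in NN. fI th (g, p) \<le> 0"
    show thesis
    proof (rule ccontr)
      assume "\<not> thesis"
      then have "AE g in M1. False" using a r by (auto elim!: AE_mp)
      then show False using prob_space.AE_False[OF M1_prob] by simp
    qed
  qed
  have pr: "Measurable.pred NN (\<lambda>p. fI th (g, p) \<le> 0)"
    using measurable_compose[OF Pair_meas fI_meas] by measurable
  have "AE u in M1. AE n in M3. fI th (g, (u, n)) \<le> 0"
    using pair_sigma_finite.AE_pair[OF psf13 g] by simp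
  then have "AE n in M3. AE u in M1. fI th (g, (u, n)) \<le> 0"
    by (subst (asm) pair_sigma_finite.AE_commute[OF psf13]) (use pr in \<open>simp add: pred_def\<close>)
  moreover have "AE n in M3. h_hat sigma2 tp rp bb Rb g n \<noteq> 0" by (rule AE_CN[OF hhat_AE])
  ultimately have "AE n in M3. False"
    by eventually_elim (use pos_inner[OF th] in blast)
  then show False using prob_space.AE_False[OF M3_prob] by simp
qed

end

context sys begin

lemma w_int: "integrable MM (\<lambda>\<omega>. (norm (hh \<omega>))\<^sup>2 / (cR * ln 2))"
  using hh_int by (rule integrable_divide)

lemma fP_nonneg: "fP th P \<omega> \<ge> 0" by (simp add: fP_def)
lemma fI_nonneg: "fI th \<omega> \<ge> 0" by (simp add: fI_def)

lemma fP_int: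
  assumes "P > 0" "0 \<le> th" "th < 1"
  shows "integrable MM (fP th P)"
proof (rule Bochner_Integration.integrable_bound[OF w_int])
  show "fP th P \<in> borel_measurable MM" by measurable
  show "AE \<omega> in MM. norm (fP th P \<omega>) \<le> norm ((norm (hh \<omega>))\<^sup>2 / (cR * ln 2))"
    using fP_bound[OF assms] cR(1) by (intro AE_I2) (smt (verit) norm_ge_zero real_norm_def)
qed

lemma lim_pos:
  assumes th: "0 < th" "th < 1"
  shows "((\<lambda>P. \<integral>\<omega>. fP th P \<omega> \<partial>MM) \<longlongrightarrow> (\<integral>\<omega>. fI th \<omega> \<partial>MM)) at_top"
    and "integrable MM (fI th)"
proof -
  have lim: "AE \<omega> in MM. ((\<lambda>P. fP th P \<omega>) \<longlongrightarrow> fI th \<omega>) at_top"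
    using good_AE
  proof eventually_elim
    fix \<omega> assume g: "Good \<omega>"
    then have h0: "hh \<omega> \<noteq> 0" and Y0: "Yq \<omega> > 0" by (auto simp: Good_def Yq_def)
    have b: "bq (hh \<omega>) > 0" using bq_ge[OF h0] cR(1) by simp
    show "((\<lambda>P. fP th P \<omega>) \<longlongrightarrow> fI th \<omega>) at_top"
      unfolding fP_eq fI_eq
      by (rule lim_theta_pos[OF th _ b tq_ge _ Y0 s2]) (auto simp: X2_def)
  qed
  have bound: "\<forall>\<^sub>F P in at_top. AE \<omega> in MM. norm (fP th P \<omega>) \<le> (norm (hh \<omega>))\<^sup>2 / (cR * ln 2)"
  proof (rule eventually_at_top_linorderI[of 1])
    fix P :: real assume "1 \<le> P"
    then show "AE \<omega> in MM. norm (fP th P \<omega>) \<le> (norm (hh \<omega>))\<^sup>2 / (cR * ln 2)"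
      using fP_bound[of P th] th by (intro AE_I2) auto
  qed
  show "((\<lambda>P. \<integral>\<omega>. fP th P \<omega> \<partial>MM) \<longlongrightarrow> (\<integral>\<omega>. fI th \<omega> \<partial>MM)) at_top"
    by (rule integral_dominated_convergence_at_top[OF fI_meas fP_meas w_int lim bound])
  show "integrable MM (fI th)"
    by (rule integrable_dominated_convergence_at_top[OF fI_meas fP_meas w_int lim bound])
qed

lemma lim_zero:
  "((\<lambda>P. \<integral>\<omega>. fP 0 P \<omega> \<partial>MM) \<longlongrightarrow> 0) at_top"
proof -
  have lim: "AE \<omega> in MM. ((\<lambda>P. fP 0 P \<omega>) \<longlongrightarrow> 0) at_top"
    using good_AE
  proof eventually_elim
    fix \<omega> assume g: "Good \<omega>"
    then have h0: "hh \<omega> \<noteq> 0" and X0: "X2 \<omega> > 0" by (auto simp: Good_def X2_def)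
    have b: "bq (hh \<omega>) > 0" using bq_ge[OF h0] cR(1) by simp
    have "\<forall>\<^sub>F P in at_top. fP 0 P \<omega> = 0"
      unfolding fP_eq by (rule theta0_event[OF refl _ b X0 s2]) simp
    then show "((\<lambda>P. fP 0 P \<omega>) \<longlongrightarrow> 0) at_top" by (rule tendsto_eventually)
  qed
  have bound: "\<forall>\<^sub>F P in at_top. AE \<omega> in MM. norm (fP 0 P \<omega>) \<le> (norm (hh \<omega>))\<^sup>2 / (cR * ln 2)"
  proof (rule eventually_at_top_linorderI[of 1])
    fix P :: real assume "1 \<le> P"
    then show "AE \<omega> in MM. norm (fP 0 P \<omega>) \<le> (norm (hh \<omega>))\<^sup>2 / (cR * ln 2)"
      using fP_bound[of P 0] by (intro AE_I2) auto
  qed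
  have "((\<lambda>P. \<integral>\<omega>. fP 0 P \<omega> \<partial>MM) \<longlongrightarrow> (\<integral>\<omega>. 0 \<partial>MM)) at_top"
    by (rule integral_dominated_convergence_at_top[OF _ fP_meas w_int lim bound]) simp
  then show ?thesis by simp
qed

lemma esr_eq:
  "ergodic_secrecy_rate sigma2 tp rp Tc bb Rb Reve C rho be V ((1 - th) * P) (th * P)
     = ennreal (1 - tp / Tc) * (\<integral>\<^sup>+\<omega>. ennreal (fP th P \<omega>) \<partial>MM)"
  by (simp add: ergodic_secrecy_rate_def esr_of_def fP_def hh_def he_def)

lemma esri_eq:
  "ergodic_secrecy_rate_inf sigma2 tp rp Tc bb Rb Reve C rho be V th
     = ennreal (1 - tp / Tc) * (\<integral>\<^sup>+\<omega>. ennreal (fI th \<omega>) \<partial>MM)"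
  by (simp add: ergodic_secrecy_rate_inf_def esr_of_def fI_def hh_def he_def)

lemma esr_real:
  assumes "P > 0" "0 \<le> th" "th < 1" "Tc > tp"
  shows "ergodic_secrecy_rate sigma2 tp rp Tc bb Rb Reve C rho be V ((1 - th) * P) (th * P)
     = ennreal ((1 - tp / Tc) * (\<integral>\<omega>. fP th P \<omega> \<partial>MM))"
proof -
  have eta: "1 - tp / Tc \<ge> 0" using assms(4) tp by (simp add: field_simps)
  have "(\<integral>\<^sup>+\<omega>. ennreal (fP th P \<omega>) \<partial>MM) = ennreal (\<integral>\<omega>. fP th P \<omega> \<partial>MM)"
    by (rule nn_integral_eq_integral[OF fP_int[OF assms(1-3)]]) (simp add: fP_nonneg)
  moreover have "(\<integral>\<omega>. fP th P \<omega> \<partial>MM) \<ge> 0" by (simp add: fP_nonneg)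
  ultimately show ?thesis unfolding esr_eq using eta by (simp add: ennreal_mult)
qed

theorem main:
  assumes Tc: "Tc > tp" and th: "0 \<le> th" "th < 1"
  shows "(th = 0 \<longrightarrow>
            ((\<lambda>P. ergodic_secrecy_rate sigma2 tp rp Tc bb Rb Reve C rho be V ((1 - th) * P) (th * P))
              \<longlongrightarrow> 0) at_top)
       \<and> (0 < th \<longrightarrow>
            ((\<lambda>P. ergodic_secrecy_rate sigma2 tp rp Tc bb Rb Reve C rho be V ((1 - th) * P) (th * P))
              \<longlongrightarrow> ergodic_secrecy_rate_inf sigma2 tp rp Tc bb Rb Reve C rho be V th) at_top
            \<and> ergodic_secrecy_rate_inf sigma2 tp rp Tc bb Rb Reve C rho be V th < \<infinity>
            \<and> 0 < ergodic_secrecy_rate_inf sigma2 tp rp Tc bb Rb Reve C rho be V th)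
       \<and> ((\<exists>L. ((\<lambda>P. ergodic_secrecy_rate sigma2 tp rp Tc bb Rb Reve C rho be V ((1 - th) * P) (th * P))
              \<longlongrightarrow> L) at_top \<and> (L = 0 \<longleftrightarrow> th = 0)))"
proof -
  define eta where "eta = 1 - tp / Tc"
  have eta: "eta > 0" using Tc tp by (simp add: eta_def field_simps)
  let ?E = "\<lambda>P. ergodic_secrecy_rate sigma2 tp rp Tc bb Rb Reve C rho be V ((1 - th) * P) (th * P)"
  let ?I = "ergodic_secrecy_rate_inf sigma2 tp rp Tc bb Rb Reve C rho be V th"
  have A: "(?E \<longlongrightarrow> 0) at_top" if th0: "th = 0"
  proof -
    have "((\<lambda>P. ennreal (eta * (\<integral>\<omega>. fP th P \<omega> \<partial>MM))) \<longlongrightarrow> ennreal (eta * 0)) at_top"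
      using lim_zero th0 by (intro tendsto_ennrealI tendsto_mult tendsto_const) simp
    then have "((\<lambda>P. ennreal (eta * (\<integral>\<omega>. fP th P \<omega> \<partial>MM))) \<longlongrightarrow> 0) at_top" by simp
    moreover have "\<forall>\<^sub>F P in at_top. ennreal (eta * (\<integral>\<omega>. fP th P \<omega> \<partial>MM)) = ?E P"
      using esr_real[OF _ th Tc] by (intro eventually_at_top_linorderI[of 1]) (simp add: eta_def)
    ultimately show ?thesis by (rule Lim_transform_eventually)
  qed
  have B: "(?E \<longlongrightarrow> ?I) at_top \<and> ?I < \<infinity> \<and> 0 < ?I" if thp: "0 < th"
  proof -
    note L = lim_pos[OF thp th(2)]
    have Ieq: "?I = ennreal (eta * (\<integral>\<omega>. fI th \<omega> \<partial>MM))"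
    proof -
      have "(\<integral>\<^sup>+\<omega>. ennreal (fI th \<omega>) \<partial>MM) = ennreal (\<integral>\<omega>. fI th \<omega> \<partial>MM)"
        by (rule nn_integral_eq_integral[OF L(2)]) (simp add: fI_nonneg)
      moreover have "(\<integral>\<omega>. fI th \<omega> \<partial>MM) \<ge> 0" by (simp add: fI_nonneg)
      ultimately show ?thesis unfolding esri_eq using eta by (simp add: ennreal_mult eta_def)
    qed
    have lim: "(?E \<longlongrightarrow> ?I) at_top"
    proof -
      have "((\<lambda>P. ennreal (eta * (\<integral>\<omega>. fP th P \<omega> \<partial>MM))) \<longlongrightarrow> ennreal (eta * (\<integral>\<omega>. fI th \<omega> \<partial>MM))) at_top"
        using L(1) by (intro tendsto_ennrealI tendsto_mult tendsto_const)
      moreover have "\<forall>\<^sub>F P in at_top. ennreal (eta * (\<integral>\<omega>. fP th P \<omega> \<partial>MM)) = ?E P"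
        using esr_real[OF _ th Tc] by (intro eventually_at_top_linorderI[of 1]) (simp add: eta_def)
      ultimately show ?thesis unfolding Ieq by (rule Lim_transform_eventually)
    qed
    have fin: "?I < \<infinity>" unfolding Ieq by simp
    have pos: "0 < ?I"
      unfolding esri_eq using fI_pos[OF thp th(2)] eta by (simp add: eta_def ennreal_zero_less_mult_iff)
    show ?thesis using lim fin pos by blast
  qed
  have C: "\<exists>L. (?E \<longlongrightarrow> L) at_top \<and> (L = 0 \<longleftrightarrow> th = 0)"
  proof (cases "th = 0")
    case True then show ?thesis using A by blast
  next
    case False
    then have "0 < th" using th by simp
    then show ?thesis using B False by (metis less_irrefl)
  qed
  show ?thesis using A B C by blast
qed

end

theorem proposition1:
  fixes Rb Reve C :: "complex^'m^'m"
    and V :: "complex^'m \<Rightarrow> complex^'k^'m"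
    and sigma2 tp rp Tc rho bb be theta :: real
  assumes "CARD('m) \<ge> 2"
    and "CARD('k) + 1 = CARD('m)"
    and "sigma2 > 0" and "tp > 0" and "rp > 0" and "Tc > tp"
    and "pos_def Rb" and "pos_def Reve"
    and "spec_norm C \<le> 1"
    and "0 \<le> rho" and "rho < 1"
    and "bb > 0" and "be > 0"
    and "V \<in> borel_measurable borel"
    and "\<forall>h. h \<noteq> 0 \<longrightarrow> ctrans (V h) ** V h = mat 1 \<and> ctrans (V h) *v h = 0"
    and "0 \<le> theta" and "theta < 1"
  shows "(theta = 0 \<longrightarrow>
            ((\<lambda>P. ergodic_secrecy_rate sigma2 tp rp Tc bb Rb Reve C rho be V ((1 - theta) * P) (theta * P))
              \<longlongrightarrow> 0) at_top)
       \<and> (0 < theta \<longrightarrow>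
            ((\<lambda>P. ergodic_secrecy_rate sigma2 tp rp Tc bb Rb Reve C rho be V ((1 - theta) * P) (theta * P))
              \<longlongrightarrow> ergodic_secrecy_rate_inf sigma2 tp rp Tc bb Rb Reve C rho be V theta) at_top
            \<and> ergodic_secrecy_rate_inf sigma2 tp rp Tc bb Rb Reve C rho be V theta < \<infinity>
            \<and> 0 < ergodic_secrecy_rate_inf sigma2 tp rp Tc bb Rb Reve C rho be V theta)
       \<and> ((\<exists>L. ((\<lambda>P. ergodic_secrecy_rate sigma2 tp rp Tc bb Rb Reve C rho be V ((1 - theta) * P) (theta * P))
              \<longlongrightarrow> L) at_top \<and> (L = 0 \<longleftrightarrow> theta = 0)))"
  proof -
  interpret sys Rb sigma2 tp rp bb Reve C V rho be
    by unfold_locales (use assms in auto)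
  show ?thesis by (rule main[OF assms(6) assms(16) assms(17)])
qed

end
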